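(* Let $\rho=\rho^{ABC}$ be as follows: $A$ is $d$-dimensional, $B=B_1B_2$ with $B_1$ finite-dimensional and $B_2$ a qubit, $C$ a qubit, and $$\rho^{ABC}=p_1\,\rho_1^{AB_1}\otimes|\Psi^+\rangle\langle\Psi^+|^{B_2C}+p_2\,\rho_2^{AB_1}\otimes|\Psi^-\rangle\langle\Psi^-|^{B_2C},$$ with states $\rho_1^{AB_1},\rho_2^{AB_1}$, probabilities $p_1+p_2=1$, and $|\Psi^\pm\rangle=(|01\rangle\pm|10\rangle)/\sqrt2$. Then $S(\rho^{AB})\ge S(\rho^{ABC})$, where $\rho^{AB}=\mathrm{Tr}_C\rho^{ABC}$ and $S$ is the von Neumann entropy (base 2). Moreover, if $S(\rho^{AB})=S(\rho^{ABC})$, then $\rho_1^{AB_1}=\rho_2^{AB_1}$, $p_1=p_2=\tfrac12$, and $\rho^{ABC}$ is separable with respect to the bipartition $AB|C$. Consequently (using that $S(\rho^{AB})>S(\rho^{ABC})$ implies distillability across $AB|C$), no such state is bound entangled across $AB|C$.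
   Context: $S(\rho)=-\mathrm{Tr}\,\rho\log_2\rho$. A state is bound entangled across a cut if it is entangled across that cut but not distillable. *)

theory Defs
  imports "Jordan_Normal_Form.Matrix" "Jordan_Normal_Form.Char_Poly"
    "Jordan_Normal_Form.Schur_Decomposition" "HOL-Computational_Algebra.Polynomial"
begin

definition mtrace :: "complex mat \<Rightarrow> complex" where
  "mtrace A = (\<Sum>i<dim_row A. A $$ (i, i))"

definition hermitian_mat :: "nat \<Rightarrow> complex mat \<Rightarrow> bool" where
  "hermitian_mat n A \<longleftrightarrow> A \<in> carrier_mat n n \<and> mat_adjoint A = A"

definition psd_mat :: "nat \<Rightarrow> complex mat \<Rightarrow> bool" where
  "psd_mat n A \<longleftrightarrow> hermitian_mat n A \<and>
     (\<forall>v \<in> carrier_vec n. 0 \<le> Re ((A *\<^sub>v v) \<bullet>c v))"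

definition density :: "nat \<Rightarrow> complex mat \<Rightarrow> bool" where
  "density n A \<longleftrightarrow> psd_mat n A \<and> mtrace A = 1"

(* Kronecker (tensor) product; the index of the left factor is the more significant one *)
definition kron :: "complex mat \<Rightarrow> complex mat \<Rightarrow> complex mat" where
  "kron A B = mat (dim_row A * dim_row B) (dim_col A * dim_col B)
     (\<lambda>(i, j). A $$ (i div dim_row B, j div dim_col B) * B $$ (i mod dim_row B, j mod dim_col B))"

definition ptrace_last :: "nat \<Rightarrow> complex mat \<Rightarrow> complex mat" where
  "ptrace_last k A = mat (dim_row A div k) (dim_col A div k)
     (\<lambda>(i, j). \<Sum>c<k. A $$ (i * k + c, j * k + c))"

definition vn_entropy :: "complex mat \<Rightarrow> real" where
  "vn_entropy A = - (\<Sum>x\<in>{x. eigenvalue A x}.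
       real (order x (char_poly A)) * (if Re x = 0 then 0 else Re x * log 2 (Re x)))"

definition proj :: "complex vec \<Rightarrow> complex mat" where
  "proj v = mat (dim_vec v) (dim_vec v) (\<lambda>(i, j). v $ i * cnj (v $ j))"

(* two-qubit basis index: |xy> has index 2*x + y *)
definition psi_plus :: "complex vec" where
  "psi_plus = vec 4 (\<lambda>i. if i = 1 \<or> i = 2 then 1 / complex_of_real (sqrt 2) else 0)"

definition psi_minus :: "complex vec" where
  "psi_minus = vec 4 (\<lambda>i. if i = 1 then 1 / complex_of_real (sqrt 2)
                         else if i = 2 then - 1 / complex_of_real (sqrt 2) else 0)"

definition separable :: "nat \<Rightarrow> nat \<Rightarrow> complex mat \<Rightarrow> bool" where
  "separable dX dY \<rho> \<longleftrightarrow> \<rho> \<in> carrier_mat (dX * dY) (dX * dY) \<and>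
     (\<exists>(N::nat) (p::nat \<Rightarrow> real) \<sigma> \<tau>.
        (\<forall>k<N. 0 \<le> p k \<and> density dX (\<sigma> k) \<and> density dY (\<tau> k)) \<and>
        (\<Sum>k<N. p k) = 1 \<and>
        (\<forall>i<dX * dY. \<forall>j<dX * dY.
            \<rho> $$ (i, j) = (\<Sum>k<N. complex_of_real (p k) * kron (\<sigma> k) (\<tau> k) $$ (i, j))))"

definition entangled :: "nat \<Rightarrow> nat \<Rightarrow> complex mat \<Rightarrow> bool" where
  "entangled dX dY \<rho> \<longleftrightarrow> density (dX * dY) \<rho> \<and> \<not> separable dX dY \<rho>"

definition bound_entangled :: "(complex mat \<Rightarrow> bool) \<Rightarrow> nat \<Rightarrow> nat \<Rightarrow> complex mat \<Rightarrow> bool" where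
  "bound_entangled distillable dX dY \<rho> \<longleftrightarrow> entangled dX dY \<rho> \<and> \<not> distillable \<rho>"

end

theory Submission
  imports Defs "HOL-Computational_Algebra.Fundamental_Theorem_Algebra"
begin


lemma mult_entry: "i < dim_row A \<Longrightarrow> j < dim_col B \<Longrightarrow> dim_col A = dim_row B \<Longrightarrow>
   (A * B) $$ (i,j) = (\<Sum>k<dim_row B. A $$ (i,k) * B $$ (k,j))"
  by (simp add: scalar_prod_def atLeast0LessThan)

declare index_mult_mat(1)[simp del]
declare mult_entry[simp]

lemma adj_dim[simp]: "dim_row (mat_adjoint A) = dim_col A" "dim_col (mat_adjoint A) = dim_row A"
  by (auto simp: mat_adjoint_def)

lemma adj_index[simp]: "i < dim_col A \<Longrightarrow> j < dim_row A \<Longrightarrow> mat_adjoint A $$ (i,j) = cnj (A $$ (j,i))"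
  by (simp add: mat_adjoint_def mat_of_rows_def)

lemma adj_carrier[simp]: "A \<in> carrier_mat n m \<Longrightarrow> mat_adjoint A \<in> carrier_mat m n"
  by auto

lemma adj_adj[simp]: "mat_adjoint (mat_adjoint (A::complex mat)) = A"
  by (rule eq_matI) auto

lemma adj_mult: "dim_col (A::complex mat) = dim_row B \<Longrightarrow> mat_adjoint (A * B) = mat_adjoint B * mat_adjoint A"
  by (rule eq_matI) (auto simp: mult_entry sum_distrib_left mult.commute)

lemma adj_add: "(A::complex mat) \<in> carrier_mat n m \<Longrightarrow> B \<in> carrier_mat n m \<Longrightarrow> mat_adjoint (A + B) = mat_adjoint A + mat_adjoint B"
  by (rule eq_matI) auto

lemma adj_smult: "mat_adjoint (c \<cdot>\<^sub>m (A::complex mat)) = cnj c \<cdot>\<^sub>m mat_adjoint A"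
  by (rule eq_matI) auto

lemma adj_one[simp]: "mat_adjoint (1\<^sub>m n :: complex mat) = 1\<^sub>m n"
  by (rule eq_matI) auto

definition unitary :: "nat \<Rightarrow> complex mat \<Rightarrow> bool" where
  "unitary n U \<longleftrightarrow> U \<in> carrier_mat n n \<and> mat_adjoint U * U = 1\<^sub>m n \<and> U * mat_adjoint U = 1\<^sub>m n"

lemma unitaryI: "U \<in> carrier_mat n n \<Longrightarrow> mat_adjoint U * U = 1\<^sub>m n \<Longrightarrow> unitary n U"
  unfolding unitary_def using mat_mult_left_right_inverse[of "mat_adjoint U" n U] by auto

lemma unitary_one: "unitary n (1\<^sub>m n)"
  by (rule unitaryI) auto

lemma unitary_mult: assumes "unitary n U" "unitary n V" shows "unitary n (U * V)"
proof (rule unitaryI)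
  have U: "U \<in> carrier_mat n n" and V: "V \<in> carrier_mat n n" using assms unfolding unitary_def by auto
  show "U * V \<in> carrier_mat n n" using U V by auto
  have "mat_adjoint (U * V) * (U * V) = mat_adjoint V * (mat_adjoint U * (U * V))"
    using U V by (simp add: adj_mult assoc_mult_mat[of "mat_adjoint V" n n "mat_adjoint U" n "U*V" n])
  also have "\<dots> = mat_adjoint V * ((mat_adjoint U * U) * V)"
    using U V by (simp add: assoc_mult_mat[of _ n n _ n _ n])
  also have "\<dots> = 1\<^sub>m n" using assms U V unfolding unitary_def by auto
  finally show "mat_adjoint (U * V) * (U * V) = 1\<^sub>m n" .
qed

lemma unitary_adj: "unitary n U \<Longrightarrow> unitary n (mat_adjoint U)"
  unfolding unitary_def by auto

lemma unitary_carrier: "unitary n U \<Longrightarrow> U \<in> carrier_mat n n"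
  unfolding unitary_def by auto

lemma orth_completion:
  fixes v :: "complex vec"
  assumes v: "v \<in> carrier_vec n" and v0: "v \<noteq> 0\<^sub>v n"
  shows "\<exists>ws. set ws \<subseteq> carrier_vec n \<and> corthogonal ws \<and> length ws = n \<and> hd ws = v"
proof -
  interpret cof_vec_space n "TYPE(complex)" .
  define b where "b = basis_completion v"
  from basis_completion[OF v v0, folded b_def]
  have dist_b: "distinct b" 
    and indep: "\<not> lin_dep (set b)" and b: "set b \<subseteq> carrier_vec n" and hdb: "hd b = v" 
    and len_b: "length b = n" by auto
  have n: "n \<noteq> 0" using v v0 by auto
  from hdb len_b n obtain vs where bv: "b = v # vs" by (cases b, auto)
  define ws where "ws = gram_schmidt n b"
  from gram_schmidt_result[OF b dist_b indep refl, folded ws_def]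
  have ws: "set ws \<subseteq> carrier_vec n" "corthogonal ws" "length ws = n" 
    by (auto simp: len_b)
  from gram_schmidt_hd[OF v, of vs, folded bv] have hdws: "hd ws = v" unfolding ws_def .
  show ?thesis using ws hdws by blast
qed

lemma cscalar_sum: "(x::complex vec) \<bullet>c y = (\<Sum>k<dim_vec y. x $ k * cnj (y $ k))"
  by (simp add: scalar_prod_def atLeast0LessThan)

lemma cscalar_self: "(x::complex vec) \<bullet>c x = of_real (\<Sum>k<dim_vec x. (cmod (x $ k))^2)"
  unfolding cscalar_sum of_real_sum complex_norm_square by (rule refl)

definition nrm :: "complex vec \<Rightarrow> complex vec" where
  "nrm w = complex_of_real (1 / sqrt (\<Sum>k<dim_vec w. (cmod (w $ k))^2)) \<cdot>\<^sub>v w"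

lemma nrm_dim[simp]: "dim_vec (nrm w) = dim_vec w" by (simp add: nrm_def)
lemma nrm_carrier[simp]: "w \<in> carrier_vec n \<Longrightarrow> nrm w \<in> carrier_vec n" by (simp add: nrm_def)
lemma nrm_index: "k < dim_vec w \<Longrightarrow> nrm w $ k = complex_of_real (1 / sqrt (\<Sum>k<dim_vec w. (cmod (w $ k))^2)) * w $ k"
  by (simp add: nrm_def)

lemma unitary_from_orth:
  assumes ws: "set ws \<subseteq> carrier_vec n" "corthogonal ws" "length ws = n"
  defines "W \<equiv> mat_of_cols n (map nrm ws)"
  shows "unitary n W"
proof (rule unitaryI)
  show W: "W \<in> carrier_mat n n" using ws unfolding W_def by auto
  show "mat_adjoint W * W = 1\<^sub>m n"
  proof (rule eq_matI)
    fix i j assume i: "i < dim_row (1\<^sub>m n)" and j: "j < dim_col (1\<^sub>m n)"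
    hence i: "i < n" and j: "j < n" by auto
    have wi: "ws ! i \<in> carrier_vec n" and wj: "ws ! j \<in> carrier_vec n" using ws i j by auto
    define ri where "ri = (\<Sum>k<n. (cmod (ws ! i $ k))^2)"
    define rj where "rj = (\<Sum>k<n. (cmod (ws ! j $ k))^2)"
    have "(mat_adjoint W * W) $$ (i, j) = (\<Sum>k<n. cnj (W $$ (k,i)) * W $$ (k,j))"
      using W i j by simp
    also have "\<dots> = (\<Sum>k<n. cnj (of_real (1/sqrt ri) * ws ! i $ k) * (of_real (1/sqrt rj) * ws ! j $ k))"
      using i j ws wi wj unfolding W_def ri_def rj_def
      by (intro sum.cong refl) (simp add: mat_of_cols_def nrm_index)
    also have "\<dots> = of_real (1/sqrt ri) * of_real (1/sqrt rj) * (ws ! j \<bullet>c ws ! i)"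
      unfolding cscalar_sum using wi wj by (simp add: sum_distrib_left algebra_simps)
    also have "\<dots> = 1\<^sub>m n $$ (i,j)"
    proof (cases "i = j")
      case True
      have ne: "ws ! i \<bullet>c ws ! i \<noteq> 0" using ws(2) ws(3) i unfolding corthogonal_def by auto
      have eq: "ws ! i \<bullet>c ws ! i = of_real ri" unfolding cscalar_self ri_def using wi by simp
      have "ri \<ge> 0" unfolding ri_def by (intro sum_nonneg) auto
      with ne eq have "ri > 0" by auto
      have rr: "rj = ri" using True by (simp add: ri_def rj_def)
      have r: "(1/sqrt ri) * (1/sqrt ri) * ri = 1" using \<open>ri>0\<close>
        by (simp add: field_simps real_sqrt_mult_self)
      have e2: "ws ! j \<bullet>c ws ! i = of_real ri" using eq True by simp
      show ?thesis
        unfolding e2 rr of_real_mult[symmetric] r using True i by simp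
    next
      case False
      have "ws ! j \<bullet>c ws ! i = 0" using ws(2) ws(3) i j False unfolding corthogonal_def by auto
      then show ?thesis using False i j by simp
    qed
    finally show "(mat_adjoint W * W) $$ (i, j) = 1\<^sub>m n $$ (i,j)" .
  qed (use W in auto)
qed

definition ext :: "complex \<Rightarrow> complex mat \<Rightarrow> complex mat" where
  "ext c M = mat (Suc (dim_row M)) (Suc (dim_col M)) (\<lambda>(i,j). if i = 0 then (if j = 0 then c else 0)
      else if j = 0 then 0 else M $$ (i - 1, j - 1))"

lemma ext_dim[simp]: "dim_row (ext c M) = Suc (dim_row M)" "dim_col (ext c M) = Suc (dim_col M)"
  by (auto simp: ext_def)

lemma ext_index: "i < Suc (dim_row M) \<Longrightarrow> j < Suc (dim_col M) \<Longrightarrow> ext c M $$ (i,j) =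
   (if i = 0 then (if j = 0 then c else 0) else if j = 0 then 0 else M $$ (i - 1, j - 1))"
  by (simp add: ext_def)

lemma ext_mult: assumes "dim_col X = dim_row Y" shows "ext a X * ext b Y = ext (a*b) (X*Y)"
proof (rule eq_matI)
  fix i j assume i: "i < dim_row (ext (a*b) (X*Y))" and j: "j < dim_col (ext (a*b) (X*Y))"
  show "(ext a X * ext b Y) $$ (i,j) = ext (a*b) (X*Y) $$ (i,j)"
    using i j assms
    by (cases i; cases j) (simp_all add: sum.lessThan_Suc_shift ext_index del: sum.lessThan_Suc)
qed auto

lemma adj_ext: "mat_adjoint (ext c X) = ext (cnj c) (mat_adjoint X)"
  by (rule eq_matI) (auto simp: ext_index)

lemma ext_one: "ext 1 (1\<^sub>m k) = 1\<^sub>m (Suc k)"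
  by (rule eq_matI) (auto simp: ext_index)

lemma diagonal_ext: "diagonal_mat X \<Longrightarrow> diagonal_mat (ext c X)"
  unfolding diagonal_mat_def by (auto simp: ext_index)

lemma unitary_ext: "unitary k U \<Longrightarrow> unitary (Suc k) (ext 1 U)"
  unfolding unitary_def by (auto simp: adj_ext ext_mult ext_one)

lemma spectral_diag:
  fixes A :: "complex mat"
  assumes "A \<in> carrier_mat n n" "mat_adjoint A = A"
  shows "\<exists>U. unitary n U \<and> diagonal_mat (mat_adjoint U * A * U)"
  using assms
proof (induction n arbitrary: A)
  case 0
  then show ?case by (intro exI[of _ "1\<^sub>m 0"]) (auto simp: unitary_one diagonal_mat_def)
next
  case (Suc k)
  let ?n = "Suc k"
  have A: "A \<in> carrier_mat ?n ?n" and H: "mat_adjoint A = A" using Suc.prems by auto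
  have "degree (char_poly A) = ?n" using degree_monic_char_poly[OF A] by auto
  hence "\<not> constant (poly (char_poly A))" by (simp add: constant_degree)
  then obtain e where "poly (char_poly A) e = 0" using fundamental_theorem_of_algebra by blast
  hence ev: "eigenvalue A e" using eigenvalue_root_char_poly[OF A] by simp
  define v where "v = find_eigenvector A e"
  have "eigenvector A v e" unfolding v_def by (rule find_eigenvector[OF A ev])
  hence v: "v \<in> carrier_vec ?n" and v0: "v \<noteq> 0\<^sub>v ?n" and Av: "A *\<^sub>v v = e \<cdot>\<^sub>v v"
    unfolding eigenvector_def using A by auto
  obtain ws where ws: "set ws \<subseteq> carrier_vec ?n" "corthogonal ws" "length ws = ?n" "hd ws = v"
    using orth_completion[OF v v0] by blast
  define W where "W = mat_of_cols ?n (map nrm ws)"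
  have uW: "unitary ?n W" unfolding W_def by (rule unitary_from_orth[OF ws(1-3)])
  have W: "W \<in> carrier_mat ?n ?n" using uW unitary_carrier by auto
  have ws0: "ws ! 0 = v" using ws(3,4) by (cases ws) auto
  have colW: "col W 0 = nrm v" unfolding W_def using ws ws0 v
    by (subst col_mat_of_cols) auto
  have AW: "A *\<^sub>v col W 0 = e \<cdot>\<^sub>v col W 0"
    unfolding colW nrm_def using A v Av
    by (simp add: mult_mat_vec[OF A] smult_smult_assoc mult.commute)
  define B where "B = mat_adjoint W * A * W"
  have aW: "mat_adjoint W \<in> carrier_mat ?n ?n" using W by auto
  have B: "B \<in> carrier_mat ?n ?n" unfolding B_def using W A by auto
  have B2: "B = mat_adjoint W * (A * W)" unfolding B_def using assoc_mult_mat[OF aW A W] .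
  have HB: "mat_adjoint B = B" unfolding B2 using W A
    by (simp add: adj_mult H assoc_mult_mat[OF aW A W])
  have cW: "col W 0 \<in> carrier_vec ?n" using W by (intro carrier_vecI) auto
  have colB: "col B 0 = e \<cdot>\<^sub>v col (1\<^sub>m ?n) 0"
  proof -
    have "col B 0 = mat_adjoint W *\<^sub>v col (A * W) 0" unfolding B2
      using aW A W by (subst col_mult2[of _ ?n ?n _ ?n]) auto
    also have "\<dots> = mat_adjoint W *\<^sub>v (e \<cdot>\<^sub>v col W 0)"
      using A W by (subst col_mult2[of _ ?n ?n _ ?n]) (auto simp: AW)
    also have "\<dots> = e \<cdot>\<^sub>v (mat_adjoint W *\<^sub>v col W 0)"
      using aW W cW by (subst mult_mat_vec[OF aW]) auto
    also have "mat_adjoint W *\<^sub>v col W 0 = col (mat_adjoint W * W) 0"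
      using aW W by (subst col_mult2[of _ ?n ?n _ ?n]) auto
    also have "mat_adjoint W * W = 1\<^sub>m ?n" using uW unfolding unitary_def by auto
    finally show ?thesis .
  qed
  have Bi0: "B $$ (i,0) = (if i = 0 then e else 0)" if "i < ?n" for i
    using arg_cong[OF colB, of "\<lambda>x. x $ i"] that B by auto
  have B0j: "B $$ (0,j) = (if j = 0 then e else 0)" if "j < ?n" for j
  proof -
    have "B $$ (0,j) = mat_adjoint B $$ (0,j)" using HB by simp
    also have "\<dots> = cnj (B $$ (j,0))" using B that by simp
    finally have "B $$ (0,j) = cnj (B $$ (j,0))" .
    then show ?thesis using Bi0[OF that] Bi0[of 0] by (auto split: if_splits)
  qed
  define A3 where "A3 = mat k k (\<lambda>(i,j). B $$ (Suc i, Suc j))"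
  have A3: "A3 \<in> carrier_mat k k" unfolding A3_def by auto
  have BA3: "B = ext e A3"
  proof (rule eq_matI)
    fix i j assume i: "i < dim_row (ext e A3)" and j: "j < dim_col (ext e A3)"
    show "B $$ (i,j) = ext e A3 $$ (i,j)"
      using i j A3 Bi0 B0j by (cases i; cases j) (auto simp: ext_index A3_def)
  qed (use B A3 in auto)
  have HA3: "mat_adjoint A3 = A3"
  proof (rule eq_matI)
    fix i j assume i: "i < dim_row A3" and j: "j < dim_col A3"
    have "A3 $$ (i,j) = B $$ (Suc i, Suc j)" using i j A3 by (simp add: A3_def)
    also have "\<dots> = mat_adjoint B $$ (Suc i, Suc j)" using HB by simp
    also have "\<dots> = cnj (A3 $$ (j,i))" using i j A3 B by (simp add: A3_def)
    finally show "mat_adjoint A3 $$ (i,j) = A3 $$ (i,j)" using i j A3 by simp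
  qed (use A3 in auto)
  obtain U3 where uU3: "unitary k U3" and dU3: "diagonal_mat (mat_adjoint U3 * A3 * U3)"
    using Suc.IH[OF A3 HA3] by blast
  have U3: "U3 \<in> carrier_mat k k" using uU3 unitary_carrier by auto
  define E where "E = ext 1 U3"
  have uE: "unitary ?n E" unfolding E_def using unitary_ext[OF uU3] .
  have E: "E \<in> carrier_mat ?n ?n" using uE unitary_carrier by auto
  have aE: "mat_adjoint E \<in> carrier_mat ?n ?n" using E by auto
  define U where "U = W * E"
  have uU: "unitary ?n U" unfolding U_def by (rule unitary_mult[OF uW uE])
  have "mat_adjoint U * A * U = (mat_adjoint E * mat_adjoint W) * A * (W * E)"
    unfolding U_def using W E by (simp add: adj_mult)
  also have "\<dots> = mat_adjoint E * (mat_adjoint W * A) * (W * E)"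
    using assoc_mult_mat[OF aE aW A] by simp
  also have "\<dots> = mat_adjoint E * ((mat_adjoint W * A) * (W * E))"
    using aE aW A W E by (subst assoc_mult_mat[of _ ?n ?n _ ?n _ ?n]) auto
  also have "(mat_adjoint W * A) * (W * E) = ((mat_adjoint W * A) * W) * E"
    using aE aW A W E by (subst assoc_mult_mat[of _ ?n ?n _ ?n _ ?n]) auto
  also have "mat_adjoint E * (((mat_adjoint W * A) * W) * E) = (mat_adjoint E * B) * E"
    unfolding B_def using aE aW A W E by (subst assoc_mult_mat[of _ ?n ?n _ ?n _ ?n]) auto
  also have "\<dots> = ext (1 * e * 1) (mat_adjoint U3 * A3 * U3)"
    unfolding E_def BA3 adj_ext using U3 A3 by (simp add: ext_mult)
  finally have "mat_adjoint U * A * U = ext e (mat_adjoint U3 * A3 * U3)" by simp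
  then show ?case using uU diagonal_ext[OF dU3] by auto
qed

definition dm :: "nat \<Rightarrow> (nat \<Rightarrow> real) \<Rightarrow> complex mat" where
  "dm n d = mat n n (\<lambda>(i,j). if i = j then complex_of_real (d i) else 0)"

lemma dm_carrier[simp]: "dm n d \<in> carrier_mat n n" by (simp add: dm_def)
lemma dm_dim[simp]: "dim_row (dm n d) = n" "dim_col (dm n d) = n" by (auto simp: dm_def)
lemma dm_index: "i < n \<Longrightarrow> j < n \<Longrightarrow> dm n d $$ (i,j) = (if i = j then complex_of_real (d i) else 0)"
  by (simp add: dm_def)

definition gl :: "real \<Rightarrow> real" where "gl x = (if x = 0 then 0 else x * log 2 x)"

lemma spectral:
  assumes "hermitian_mat n A"
  shows "\<exists>U d. unitary n U \<and> A = U * dm n d * mat_adjoint U"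
proof -
  have A: "A \<in> carrier_mat n n" and H: "mat_adjoint A = A" using assms unfolding hermitian_mat_def by auto
  obtain U where uU: "unitary n U" and dg: "diagonal_mat (mat_adjoint U * A * U)"
    using spectral_diag[OF A H] by blast
  have U: "U \<in> carrier_mat n n" using uU unitary_carrier by auto
  have aU: "mat_adjoint U \<in> carrier_mat n n" using U by auto
  define D where "D = mat_adjoint U * A * U"
  have D: "D \<in> carrier_mat n n" unfolding D_def using U A by auto
  have D2: "D = mat_adjoint U * (A * U)" unfolding D_def using assoc_mult_mat[OF aU A U] .
  have HD: "mat_adjoint D = D" unfolding D2 using U A
    by (simp add: adj_mult H assoc_mult_mat[OF aU A U])
  define d where "d i = Re (D $$ (i,i))" for i
  have Dd: "D = dm n d"
  proof (rule eq_matI)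
    fix i j assume i: "i < dim_row (dm n d)" and j: "j < dim_col (dm n d)"
    show "D $$ (i,j) = dm n d $$ (i,j)"
    proof (cases "i = j")
      case True
      have "D $$ (i,i) = cnj (D $$ (i,i))"
        using arg_cong[OF HD, of "\<lambda>M. M $$ (i,i)"] i D by simp
      hence "Im (D $$ (i,i)) = 0" by (metis cnj.simps(2) neg_equal_zero)
      hence "D $$ (i,i) = complex_of_real (d i)" unfolding d_def by (simp add: complex_eq_iff)
      then show ?thesis using True i by (simp add: dm_index)
    next
      case False
      then show ?thesis using dg i j D U unfolding D_def diagonal_mat_def by (simp add: dm_index)
    qed
  qed (use D in auto)
  have UaU: "U * mat_adjoint U = 1\<^sub>m n" using uU unfolding unitary_def by auto
  have "U * D * mat_adjoint U = U * (mat_adjoint U * (A * U)) * mat_adjoint U" unfolding D2 ..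
  also have "\<dots> = (U * mat_adjoint U) * (A * U) * mat_adjoint U"
    using U aU A by (subst assoc_mult_mat[of U n n _ n _ n]) auto
  also have "\<dots> = (A * U) * mat_adjoint U" using A U aU by (simp add: UaU)
  also have "\<dots> = A * (U * mat_adjoint U)" using A U aU by (simp add: assoc_mult_mat[OF A U aU])
  also have "\<dots> = A" using A UaU by simp
  finally show ?thesis using uU Dd by blast
qed

lemma lin_order: "order x [:-a, 1:] = (if x = a then 1 else 0)"
proof (cases "x = a")
  case True then show ?thesis using order_power_n_n[of a 1] by simp
next
  case False then show ?thesis by (auto intro!: order_0I)
qed

lemma root_sum_aux:
  fixes es :: "complex list"
  assumes "finite S" "set es \<subseteq> S"
  shows "(\<Sum>x\<in>S. real (order x (\<Prod>a\<leftarrow>es. [:-a,1:])) * h x) = (\<Sum>a\<leftarrow>es. h a)"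
  using assms(2)
proof (induction es)
  case Nil
  then show ?case by (simp add: order_0I)
next
  case (Cons a es)
  have nz: "(\<Prod>a\<leftarrow>es. [:-a,1:]) \<noteq> (0::complex poly)"
  proof (induction es)
    case (Cons b es)
    have "[:-b,1:] \<noteq> (0::complex poly)" by simp
    then show ?case using Cons by (simp only: list.map prod_list.Cons mult_eq_0_iff) simp
  qed simp
  have "(\<Sum>x\<in>S. real (order x (\<Prod>a\<leftarrow>a#es. [:-a,1:])) * h x)
     = (\<Sum>x\<in>S. (if x = a then h x else 0) + real (order x (\<Prod>a\<leftarrow>es. [:-a,1:])) * h x)"
  proof (intro sum.cong refl)
    fix x
    have om: "order x ([:-a,1:] * (\<Prod>a\<leftarrow>es. [:-a,1:])) = order x [:-a,1:] + order x (\<Prod>a\<leftarrow>es. [:-a,1:])"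
    proof (rule order_mult)
      have "[:-a,1:] \<noteq> (0::complex poly)" by simp
      then show "[:-a,1:] * (\<Prod>a\<leftarrow>es. [:-a,1:]) \<noteq> 0" using nz by (simp only: mult_eq_0_iff) blast
    qed
    show "real (order x (\<Prod>a\<leftarrow>a#es. [:-a,1:])) * h x = (if x = a then h x else 0) + real (order x (\<Prod>a\<leftarrow>es. [:-a,1:])) * h x"
      by (simp only: list.map prod_list.Cons om lin_order) (simp add: algebra_simps)
  qed
  also have "\<dots> = h a + (\<Sum>a\<leftarrow>es. h a)"
    using Cons assms(1) by (simp add: sum.distrib)
  finally show ?case by simp
qed

lemma root_sum:
  fixes es :: "complex list"
  shows "(\<Sum>x\<in>{x. poly (\<Prod>a\<leftarrow>es. [:-a,1:]) x = 0}. real (order x (\<Prod>a\<leftarrow>es. [:-a,1:])) * h x) = (\<Sum>a\<leftarrow>es. h a)"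
proof -
  have "{x. poly (\<Prod>a\<leftarrow>es. [:-a,1:]) x = 0} = set es"
    by (induction es) auto
  then show ?thesis using root_sum_aux[of "set es" es h] by simp
qed

lemma vn_entropy_diag:
  assumes uU: "unitary n U"
  shows "vn_entropy (U * dm n d * mat_adjoint U) = - (\<Sum>i<n. gl (d i))"
proof -
  have U: "U \<in> carrier_mat n n" and aU: "mat_adjoint U \<in> carrier_mat n n" using uU unitary_carrier by auto
  have UaU: "U * mat_adjoint U = 1\<^sub>m n" and aUU: "mat_adjoint U * U = 1\<^sub>m n" using uU unfolding unitary_def by auto
  let ?A = "U * dm n d * mat_adjoint U"
  have A: "?A \<in> carrier_mat n n" using U by auto
  have "similar_mat ?A (dm n d)" unfolding similar_mat_def similar_mat_wit_def
    using A U aU UaU aUU by (intro exI[of _ U] exI[of _ "mat_adjoint U"]) auto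
  hence "char_poly ?A = char_poly (dm n d)" by (rule char_poly_similar)
  also have "\<dots> = (\<Prod>a\<leftarrow>diag_mat (dm n d). [:- a, 1:])"
    by (rule char_poly_upper_triangular[of _ n]) (auto simp: upper_triangular_def dm_index)
  also have "diag_mat (dm n d) = map (\<lambda>i. complex_of_real (d i)) [0..<n]"
    by (simp add: diag_mat_def dm_index)
  finally have cp: "char_poly ?A = (\<Prod>a\<leftarrow>map (\<lambda>i. complex_of_real (d i)) [0..<n]. [:- a, 1:])" .
  have ev: "{x. eigenvalue ?A x} = {x. poly (char_poly ?A) x = 0}"
    using eigenvalue_root_char_poly[OF A] by auto
  show ?thesis
    unfolding vn_entropy_def ev cp root_sum
    by (auto simp: gl_def sum_list_map_eq_sum_count atLeast0LessThan[symmetric] sum_set_upt_conv_sum_list_nat[symmetric] comp_def intro!: sum.cong)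
qed

lemma ln_strict: "0 < (y::real) \<Longrightarrow> y \<noteq> 1 \<Longrightarrow> ln y < y - 1"
  using ln_le_minus_one[of y] ln_eq_minus_one[of y] by fastforce

lemma gl_tangent_gen:
  assumes a: "a > 0" and x: "x \<ge> 0"
  shows "gl a + (log 2 a + 1/ln 2) * (x - a) \<le> gl x"
    and "x \<noteq> a \<Longrightarrow> gl a + (log 2 a + 1/ln 2) * (x - a) < gl x"
proof -
  have l2: "ln 2 > (0::real)" by simp
  have lhs: "gl a + (log 2 a + 1/ln 2) * (x - a) = (x * ln a + (x - a)) / ln 2"
    using a unfolding gl_def log_def by (simp add: field_simps)
  have main: "x * ln a + (x - a) \<le> (if x = 0 then 0 else x * ln x)"
    and strict: "x \<noteq> a \<Longrightarrow> x * ln a + (x - a) < (if x = 0 then 0 else x * ln x)"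
  proof -
    { assume x0: "x = 0"
      then have "x * ln a + (x - a) < (if x = 0 then 0 else x * ln x)" using a by simp }
    moreover
    { assume x0: "x > 0"
      have "ln (a/x) \<le> a/x - 1" using ln_le_minus_one[of "a/x"] a x0 by simp
      hence "x * ln (a/x) \<le> x * (a/x - 1)" using x0 by (simp add: mult_left_mono)
      moreover have e1: "x * ln (a/x) = x * ln a - x * ln x" using x0 a by (simp add: ln_div algebra_simps)
      moreover have e2: "x * (a/x - 1) = a - x" using x0 by (simp add: field_simps)
      ultimately have "x * ln a + (x - a) \<le> x * ln x" by linarith
      moreover have "x \<noteq> a \<Longrightarrow> x * ln a + (x - a) < x * ln x"
      proof -
        assume "x \<noteq> a"
        hence "a/x \<noteq> 1" using x0 by simp
        hence "ln (a/x) < a/x - 1" using ln_strict[of "a/x"] a x0 by simp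
        hence "x * ln (a/x) < x * (a/x - 1)" using x0 by simp
        thus ?thesis using e1 e2 by linarith
      qed
      ultimately have "x * ln a + (x - a) \<le> (if x = 0 then 0 else x * ln x)"
         "x \<noteq> a \<Longrightarrow> x * ln a + (x - a) < (if x = 0 then 0 else x * ln x)" using x0 by auto }
    ultimately show "x * ln a + (x - a) \<le> (if x = 0 then 0 else x * ln x)"
      "x \<noteq> a \<Longrightarrow> x * ln a + (x - a) < (if x = 0 then 0 else x * ln x)" using x by force+
  qed
  have rhs: "gl x = (if x = 0 then 0 else x * ln x) / ln 2" unfolding gl_def log_def by simp
  show "gl a + (log 2 a + 1/ln 2) * (x - a) \<le> gl x"
    unfolding lhs rhs using main l2 by (simp add: divide_right_mono)
  show "x \<noteq> a \<Longrightarrow> gl a + (log 2 a + 1/ln 2) * (x - a) < gl x"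
    unfolding lhs rhs using strict l2 by (simp add: divide_strict_right_mono)
qed

lemma jensen_gl:
  fixes w x :: "'i \<Rightarrow> real"
  assumes I: "finite I" and w: "\<And>j. j \<in> I \<Longrightarrow> 0 \<le> w j" and sw: "sum w I = 1"
    and x: "\<And>j. j \<in> I \<Longrightarrow> 0 \<le> x j"
  shows "gl (\<Sum>j\<in>I. w j * x j) \<le> (\<Sum>j\<in>I. w j * gl (x j))"
    and "gl (\<Sum>j\<in>I. w j * x j) = (\<Sum>j\<in>I. w j * gl (x j)) \<Longrightarrow> j \<in> I \<Longrightarrow> w j > 0 \<Longrightarrow> x j = (\<Sum>j\<in>I. w j * x j)"
proof -
  define a where "a = (\<Sum>j\<in>I. w j * x j)"
  have a0: "a \<ge> 0" unfolding a_def using w x by (intro sum_nonneg) auto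
  have "gl a \<le> (\<Sum>j\<in>I. w j * gl (x j)) \<and>
      (gl a = (\<Sum>j\<in>I. w j * gl (x j)) \<longrightarrow> (\<forall>j\<in>I. w j > 0 \<longrightarrow> x j = a))"
  proof (cases "a = 0")
    case True
    have z: "\<forall>j\<in>I. w j * x j = 0"
    proof -
      have "(\<Sum>j\<in>I. w j * x j) = 0" using True unfolding a_def .
      moreover have "\<forall>j\<in>I. 0 \<le> w j * x j" using w x by simp
      ultimately show ?thesis using sum_nonneg_eq_0_iff[OF I, of "\<lambda>j. w j * x j"] by simp
    qed
    have "\<forall>j\<in>I. w j * gl (x j) = 0"
    proof
      fix j assume "j \<in> I"
      then have "w j = 0 \<or> x j = 0" using z by simp
      then show "w j * gl (x j) = 0" by (auto simp: gl_def)
    qed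
    hence "(\<Sum>j\<in>I. w j * gl (x j)) = 0" by simp
    moreover have "\<forall>j\<in>I. w j > 0 \<longrightarrow> x j = a"
    proof (intro ballI impI)
      fix j assume "j \<in> I" "w j > 0"
      then have "w j * x j = 0" "w j \<noteq> 0" using z by auto
      then show "x j = a" using True by simp
    qed
    ultimately show ?thesis using True by (simp add: gl_def)
  next
    case False
    hence apos: "a > 0" using a0 by simp
    define c where "c = log 2 a + 1/ln 2"
    have t: "w j * (gl a + c * (x j - a)) \<le> w j * gl (x j)" if j: "j \<in> I" for j
    proof -
      have "gl a + c * (x j - a) \<le> gl (x j)" using gl_tangent_gen(1)[OF apos x[OF j]] unfolding c_def .
      then show ?thesis using w[OF j] by (rule mult_left_mono)
    qed
    have "(\<Sum>j\<in>I. w j * (gl a + c * (x j - a))) = (\<Sum>j\<in>I. gl a * w j + c * (w j * x j) - (c * a) * w j)"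
      by (intro sum.cong refl) (simp add: algebra_simps)
    also have "\<dots> = gl a * sum w I + c * (\<Sum>j\<in>I. w j * x j) - (c * a) * sum w I"
      by (simp add: sum_subtractf sum.distrib sum_distrib_left)
    also have "\<dots> = gl a" using sw unfolding a_def[symmetric] by simp
    finally have eq: "(\<Sum>j\<in>I. w j * (gl a + c * (x j - a))) = gl a" .
    have "(\<Sum>j\<in>I. w j * (gl a + c * (x j - a))) \<le> (\<Sum>j\<in>I. w j * gl (x j))" using t by (rule sum_mono)
    hence le: "gl a \<le> (\<Sum>j\<in>I. w j * gl (x j))" by (simp only: eq)
    have imp: "gl a = (\<Sum>j\<in>I. w j * gl (x j)) \<longrightarrow> (\<forall>j\<in>I. w j > 0 \<longrightarrow> x j = a)"
    proof (intro impI)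
    assume e: "gl a = (\<Sum>j\<in>I. w j * gl (x j))"
    show "\<forall>j\<in>I. w j > 0 \<longrightarrow> x j = a"
    proof (rule ccontr)
      assume "\<not> (\<forall>j\<in>I. w j > 0 \<longrightarrow> x j = a)"
      then obtain j where j: "j \<in> I" "w j > 0" "x j \<noteq> a" by auto
      have "gl a + c * (x j - a) < gl (x j)" using gl_tangent_gen(2)[OF apos x[OF j(1)] j(3)] unfolding c_def .
      hence "w j * (gl a + c * (x j - a)) < w j * gl (x j)" using j(2) by (rule mult_strict_left_mono)
      hence ex: "\<exists>j\<in>I. w j * (gl a + c * (x j - a)) < w j * gl (x j)" using j(1) by blast
      have ball: "\<forall>j\<in>I. w j * (gl a + c * (x j - a)) \<le> w j * gl (x j)" using t by blast
      have "(\<Sum>j\<in>I. w j * (gl a + c * (x j - a))) < (\<Sum>j\<in>I. w j * gl (x j))"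
        by (rule sum_strict_mono_ex1[OF I ball ex])
      hence "gl a < (\<Sum>j\<in>I. w j * gl (x j))" by (simp only: eq)
      thus False using e by simp
    qed
    qed
    show ?thesis using le imp by (rule conjI)
  qed
  then show "gl (\<Sum>j\<in>I. w j * x j) \<le> (\<Sum>j\<in>I. w j * gl (x j))"
    and "gl (\<Sum>j\<in>I. w j * x j) = (\<Sum>j\<in>I. w j * gl (x j)) \<Longrightarrow> j \<in> I \<Longrightarrow> w j > 0 \<Longrightarrow> x j = (\<Sum>j\<in>I. w j * x j)"
    unfolding a_def by blast+
qed

lemma jensen2:
  assumes "0 \<le> p" "0 \<le> q" "p + q = 1" "0 \<le> a" "0 \<le> b"
  shows "gl (p * a + q * b) \<le> p * gl a + q * gl b"
    and "gl (p * a + q * b) = p * gl a + q * gl b \<Longrightarrow> 0 < p \<Longrightarrow> 0 < q \<Longrightarrow> a = b"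
proof -
  define w where "w = (\<lambda>j::nat. if j = 0 then p else q)"
  define x where "x = (\<lambda>j::nat. if j = 0 then a else b)"
  have fin: "finite {0::nat,1}" by simp
  have w0: "\<And>j. j \<in> {0,1} \<Longrightarrow> 0 \<le> w j" using assms unfolding w_def by auto
  have x0: "\<And>j. j \<in> {0,1} \<Longrightarrow> 0 \<le> x j" using assms unfolding x_def by auto
  have sw: "sum w {0,1} = 1" using assms unfolding w_def by simp
  have s1: "(\<Sum>j\<in>{0,1}. w j * x j) = p * a + q * b" unfolding w_def x_def by simp
  have s2: "(\<Sum>j\<in>{0,1}. w j * gl (x j)) = p * gl a + q * gl b" unfolding w_def x_def by simp
  note J1 = jensen_gl(1)[of "{0::nat,1}" w x, OF fin w0 sw x0]
  note J2 = jensen_gl(2)[of "{0::nat,1}" w x, OF fin w0 sw x0]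
  show "gl (p * a + q * b) \<le> p * gl a + q * gl b" using J1 unfolding s1 s2 .
  assume e: "gl (p * a + q * b) = p * gl a + q * gl b" and p: "0 < p" and q: "0 < q"
  have "x 0 = p * a + q * b" using J2[of 0] e p unfolding s1 s2 unfolding w_def by simp
  moreover have "x 1 = p * a + q * b" using J2[of 1] e q unfolding s1 s2 unfolding w_def by simp
  ultimately show "a = b" unfolding x_def by simp
qed

lemma gl_mult: assumes "0 \<le> p" "0 \<le> x" shows "gl (p * x) = p * gl x + x * gl p"
proof (cases "p = 0 \<or> x = 0")
  case True
  then show ?thesis unfolding gl_def by (elim disjE) simp_all
next
  case False
  hence p: "p > 0" and x: "x > 0" using assms by auto
  have "log 2 (p * x) = log 2 p + log 2 x" using p x by (simp add: log_mult)
  hence "(p * x) * log 2 (p * x) = p * (x * log 2 x) + x * (p * log 2 p)" by (simp add: algebra_simps)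
  then show ?thesis using p x unfolding gl_def by simp
qed

lemma binary_entropy:
  assumes "0 \<le> p" "0 \<le> q" "p + q = 1"
  shows "- gl p - gl q \<le> 1" and "- gl p - gl q = 1 \<Longrightarrow> p = 1/2"
proof -
  have h: "(1/2::real) > 0" by simp
  have g: "gl (1/2) = - 1/2" unfolding gl_def by (simp add: log_divide)
  note T1 = gl_tangent_gen[OF h assms(1)] and T2 = gl_tangent_gen[OF h assms(2)]
  define L where "L = log 2 (1/2) + 1/ln (2::real)"
  have "(gl (1/2) + L * (p - 1/2)) + (gl (1/2) + L * (q - 1/2)) = 2 * gl (1/2) + L * (p + q - 1)"
    by (simp add: algebra_simps)
  hence sum: "(gl (1/2) + (log 2 (1/2) + 1/ln 2) * (p - 1/2)) + (gl (1/2) + (log 2 (1/2) + 1/ln 2) * (q - 1/2)) = -1"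
    using assms(3) g unfolding L_def by simp
  show "- gl p - gl q \<le> 1" using T1(1) T2(1) sum by linarith
  assume e: "- gl p - gl q = 1"
  show "p = 1/2"
  proof (rule ccontr)
    assume "p \<noteq> 1/2"
    hence "q \<noteq> 1/2" using assms by auto
    thus False using T1(2)[OF \<open>p \<noteq> 1/2\<close>] T2(1) sum e by linarith
  qed
qed

lemma kron_dim[simp]: "dim_row (kron A B) = dim_row A * dim_row B" "dim_col (kron A B) = dim_col A * dim_col B"
  by (auto simp: kron_def)

lemma kron_carrier[simp]: "A \<in> carrier_mat a a' \<Longrightarrow> B \<in> carrier_mat b b' \<Longrightarrow> kron A B \<in> carrier_mat (a*b) (a'*b')"
  by (intro carrier_matI) (simp_all add: carrier_matD)

lemma kron_index: "i < dim_row A * dim_row B \<Longrightarrow> j < dim_col A * dim_col B \<Longrightarrow>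
  kron A B $$ (i,j) = A $$ (i div dim_row B, j div dim_col B) * B $$ (i mod dim_row B, j mod dim_col B)"
  by (simp add: kron_def)

lemma divmod_aux: "(k2::nat) < b \<Longrightarrow> (k1 * b + k2) div b = k1" "(k2::nat) < b \<Longrightarrow> (k1 * b + k2) mod b = k2"
  by auto

lemma idx_div: "(i::nat) < a * b \<Longrightarrow> i div b < a" by (simp add: less_mult_imp_div_less)
lemma idx_mod: "(i::nat) < a * b \<Longrightarrow> i mod b < b"
proof -
  assume "i < a * b" hence "b \<noteq> 0" by (cases b) auto
  thus ?thesis by simp
qed
lemmas idx_bounds = idx_div idx_mod

lemma idx_lt: "(k2::nat) < b \<Longrightarrow> k1 < a \<Longrightarrow> k1 * b + k2 < a * b"
proof -
  assume "k2 < b" "k1 < a"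
  hence "k1 * b + k2 < k1 * b + b" by simp
  also have "\<dots> = Suc k1 * b" by simp
  also have "\<dots> \<le> a * b" using \<open>k1 < a\<close> by (intro mult_right_mono) auto
  finally show ?thesis .
qed

lemma sum_split_mult: "(\<Sum>k<a*b. f k) = (\<Sum>i<a. \<Sum>j<b. f (i*b + j :: nat))"
proof (induction a)
  case 0 then show ?case by simp
next
  case (Suc a)
  have "(\<Sum>k<Suc a * b. f k) = (\<Sum>k\<in>{0..<a*b}. f k) + (\<Sum>k\<in>{a*b..<a*b+b}. f k)"
    by (simp add: sum.atLeastLessThan_concat atLeast0LessThan[symmetric] add.commute)
  also have "(\<Sum>k\<in>{a*b..<a*b+b}. f k) = (\<Sum>j<b. f (a*b + j))"
    using sum.shift_bounds_nat_ivl[of f 0 "a*b" b] by (simp add: atLeast0LessThan add.commute)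
  finally show ?case using Suc by (simp add: atLeast0LessThan)
qed

lemma kron_mult: assumes "dim_col A = dim_row C" "dim_col B = dim_row D"
  shows "kron A B * kron C D = kron (A * C) (B * D)"
proof (rule eq_matI)
  fix i j assume i: "i < dim_row (kron (A*C) (B*D))" and j: "j < dim_col (kron (A*C) (B*D))"
  have i': "i < dim_row A * dim_row B" and j': "j < dim_col C * dim_col D" using i j by auto
  have "(kron A B * kron C D) $$ (i,j) = (\<Sum>k<dim_row C * dim_row D. kron A B $$ (i,k) * kron C D $$ (k,j))"
    using i' j' assms by (simp add: mult_entry)
  also have "\<dots> = (\<Sum>k1<dim_row C. \<Sum>k2<dim_row D. kron A B $$ (i,k1 * dim_row D + k2) * kron C D $$ (k1 * dim_row D + k2,j))"
    by (rule sum_split_mult)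
  also have "\<dots> = (\<Sum>k1<dim_row C. \<Sum>k2<dim_row D. (A $$ (i div dim_row B, k1) * C $$ (k1, j div dim_col D)) *
         (B $$ (i mod dim_row B, k2) * D $$ (k2, j mod dim_col D)))"
  proof (intro sum.cong refl)
    fix k1 k2 assume k1: "k1 \<in> {..<dim_row C}" and k2: "k2 \<in> {..<dim_row D}"
    have lt: "k1 * dim_row D + k2 < dim_row C * dim_row D" using k1 k2 idx_lt by auto
    show "kron A B $$ (i,k1 * dim_row D + k2) * kron C D $$ (k1 * dim_row D + k2,j) =
       (A $$ (i div dim_row B, k1) * C $$ (k1, j div dim_col D)) * (B $$ (i mod dim_row B, k2) * D $$ (k2, j mod dim_col D))"
      using lt i' j' k2 assms by (simp add: kron_index divmod_aux)
  qed
  also have "\<dots> = (\<Sum>k1<dim_row C. A $$ (i div dim_row B, k1) * C $$ (k1, j div dim_col D)) *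
       (\<Sum>k2<dim_row D. B $$ (i mod dim_row B, k2) * D $$ (k2, j mod dim_col D))"
    by (simp add: sum_product)
  also have "\<dots> = kron (A * C) (B * D) $$ (i,j)"
    using i' j' assms idx_bounds[OF i'] idx_bounds[OF j'] by (simp add: kron_index mult_entry)
  finally show "(kron A B * kron C D) $$ (i,j) = kron (A * C) (B * D) $$ (i,j)" .
qed auto

lemma adj_kron: "mat_adjoint (kron A B) = kron (mat_adjoint A) (mat_adjoint B)"
proof (rule eq_matI)
  fix i j assume i: "i < dim_row (kron (mat_adjoint A) (mat_adjoint B))" and j: "j < dim_col (kron (mat_adjoint A) (mat_adjoint B))"
  then have i': "i < dim_col A * dim_col B" and j': "j < dim_row A * dim_row B" by auto
  show "mat_adjoint (kron A B) $$ (i,j) = kron (mat_adjoint A) (mat_adjoint B) $$ (i,j)"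
    using i' j' idx_bounds[OF i'] idx_bounds[OF j'] by (simp add: kron_index)
qed auto

lemma kron_add1: "A \<in> carrier_mat a a' \<Longrightarrow> B \<in> carrier_mat a a' \<Longrightarrow> kron (A + B) C = kron A C + kron B C"
  by (rule eq_matI) (auto simp: kron_index idx_bounds distrib_right)

lemma kron_add2: "B \<in> carrier_mat b b' \<Longrightarrow> C \<in> carrier_mat b b' \<Longrightarrow> kron A (B + C) = kron A B + kron A C"
  by (rule eq_matI) (auto simp: kron_index idx_bounds distrib_left)

lemma kron_smult1: "kron (c \<cdot>\<^sub>m A) B = c \<cdot>\<^sub>m kron A B"
  by (rule eq_matI) (auto simp: kron_index idx_bounds)

lemma kron_smult2: "kron A (c \<cdot>\<^sub>m B) = c \<cdot>\<^sub>m kron A B"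
  by (rule eq_matI) (auto simp: kron_index idx_bounds)

lemma kron_zero2: "kron A (0\<^sub>m b b') = 0\<^sub>m (dim_row A * b) (dim_col A * b')"
  by (rule eq_matI) (auto simp: kron_index idx_bounds)

lemma kron_one: "kron (1\<^sub>m a) (1\<^sub>m b) = 1\<^sub>m (a * b)"
proof (rule eq_matI)
  fix i j assume i: "i < dim_row (1\<^sub>m (a * b))" and j: "j < dim_col (1\<^sub>m (a * b))"
  then have i': "i < a * b" and j': "j < a * b" by auto
  have "(i div b = j div b \<and> i mod b = j mod b) = (i = j)"
    by (metis div_mult_mod_eq)
  then show "kron (1\<^sub>m a) (1\<^sub>m b) $$ (i,j) = 1\<^sub>m (a * b) $$ (i,j)"
    using i' j' idx_bounds[OF i'] idx_bounds[OF j'] by (auto simp: kron_index)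
qed auto

lemma kron_dm: "kron (dm a d) (dm b e) = dm (a*b) (\<lambda>k. d (k div b) * e (k mod b))"
proof (rule eq_matI)
  fix i j assume i: "i < dim_row (dm (a*b) (\<lambda>k. d (k div b) * e (k mod b)))" and j: "j < dim_col (dm (a*b) (\<lambda>k. d (k div b) * e (k mod b)))"
  then have i': "i < a * b" and j': "j < a * b" by auto
  have "(i div b = j div b \<and> i mod b = j mod b) = (i = j)"
    by (metis div_mult_mod_eq)
  then show "kron (dm a d) (dm b e) $$ (i,j) = dm (a*b) (\<lambda>k. d (k div b) * e (k mod b)) $$ (i,j)"
    using i' j' idx_bounds[OF i'] idx_bounds[OF j'] by (auto simp: kron_index dm_index)
qed auto

lemma mtrace_kron: assumes "A \<in> carrier_mat a a" "B \<in> carrier_mat b b"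
  shows "mtrace (kron A B) = mtrace A * mtrace B"
proof -
  have "mtrace (kron A B) = (\<Sum>k<a*b. kron A B $$ (k,k))" using assms by (simp add: mtrace_def)
  also have "\<dots> = (\<Sum>i<a. \<Sum>j<b. A $$ (i,i) * B $$ (j,j))"
    unfolding sum_split_mult using assms
    by (intro sum.cong refl) (simp add: kron_index idx_lt divmod_aux)
  also have "\<dots> = mtrace A * mtrace B" using assms by (simp add: mtrace_def sum_product)
  finally show ?thesis .
qed

lemma unitary_kron: assumes "unitary a U" "unitary b V" shows "unitary (a*b) (kron U V)"
proof (rule unitaryI)
  have U: "U \<in> carrier_mat a a" and V: "V \<in> carrier_mat b b" using assms unitary_carrier by auto
  show "kron U V \<in> carrier_mat (a*b) (a*b)" using U V by simp
  have "mat_adjoint (kron U V) * kron U V = kron (mat_adjoint U * U) (mat_adjoint V * V)"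
    unfolding adj_kron using U V by (subst kron_mult) auto
  also have "\<dots> = 1\<^sub>m (a*b)" using assms unfolding unitary_def by (simp add: kron_one)
  finally show "mat_adjoint (kron U V) * kron U V = 1\<^sub>m (a*b)" .
qed

lemma ud_entry: assumes "U \<in> carrier_mat n n" "i < n" "k < n"
  shows "(U * dm n d) $$ (i,k) = U $$ (i,k) * complex_of_real (d k)"
proof -
  have "(U * dm n d) $$ (i,k) = (\<Sum>m<n. U $$ (i,m) * dm n d $$ (m,k))" using assms by (simp add: mult_entry)
  also have "\<dots> = (\<Sum>m<n. if m = k then U $$ (i,k) * complex_of_real (d k) else 0)"
    using assms by (intro sum.cong refl) (simp add: dm_index)
  also have "\<dots> = U $$ (i,k) * complex_of_real (d k)" using assms by simp
  finally show ?thesis .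
qed

lemma udu_carrier[simp]: "U \<in> carrier_mat n n \<Longrightarrow> U * dm n d * mat_adjoint U \<in> carrier_mat n n"
  by (metis adj_carrier dm_carrier mult_carrier_mat)

lemma udu_entry: assumes U: "U \<in> carrier_mat n n" and i: "i < n" and l: "l < n"
  shows "(U * dm n d * mat_adjoint U) $$ (i,l) = (\<Sum>k<n. U $$ (i,k) * complex_of_real (d k) * cnj (U $$ (l,k)))"
proof -
  have "(U * dm n d * mat_adjoint U) $$ (i,l) = (\<Sum>k<n. (U * dm n d) $$ (i,k) * mat_adjoint U $$ (k,l))"
    using U i l by (simp add: mult_entry)
  also have "\<dots> = (\<Sum>k<n. U $$ (i,k) * complex_of_real (d k) * cnj (U $$ (l,k)))"
    using U i l by (intro sum.cong refl) (simp add: ud_entry del: mult_entry)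
  finally show ?thesis .
qed

lemma adj_dm: "mat_adjoint (dm n d) = dm n d"
  by (rule eq_matI) (auto simp: dm_index)

lemma herm_udu: assumes U: "U \<in> carrier_mat n n"
  shows "mat_adjoint (U * dm n d * mat_adjoint U) = U * dm n d * mat_adjoint U"
proof -
  have "mat_adjoint (U * dm n d * mat_adjoint U) = mat_adjoint (mat_adjoint U) * mat_adjoint (U * dm n d)"
    using U by (simp add: adj_mult)
  also have "\<dots> = U * (dm n d * mat_adjoint U)" using U by (simp add: adj_mult adj_dm)
  also have "\<dots> = U * dm n d * mat_adjoint U"
    using U by (simp add: assoc_mult_mat[of U n n "dm n d" n "mat_adjoint U" n])
  finally show ?thesis .
qed

lemma quad_form: assumes U: "U \<in> carrier_mat n n" and v: "v \<in> carrier_vec n"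
  shows "((U * dm n d * mat_adjoint U) *\<^sub>v v) \<bullet>c v =
     complex_of_real (\<Sum>k<n. d k * (cmod (\<Sum>l<n. cnj (U $$ (l,k)) * v $ l))^2)"
proof -
  let ?A = "U * dm n d * mat_adjoint U"
  define w where "w k = (\<Sum>l<n. cnj (U $$ (l,k)) * v $ l)" for k
  have A: "?A \<in> carrier_mat n n" using U by simp
  have Av: "(?A *\<^sub>v v) $ i = (\<Sum>l<n. ?A $$ (i,l) * v $ l)" if i: "i < n" for i
  proof -
    have dA: "dim_row ?A = n" "dim_col ?A = n" using A by auto
    have dv: "dim_vec v = n" using v by auto
    have "(?A *\<^sub>v v) $ i = row ?A i \<bullet> v" using i dA by (simp only: index_mult_mat_vec)
    also have "\<dots> = (\<Sum>l<n. row ?A i $ l * v $ l)" unfolding scalar_prod_def dv atLeast0LessThan ..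
    also have "\<dots> = (\<Sum>l<n. ?A $$ (i,l) * v $ l)"
      using i dA by (intro sum.cong refl) (simp only: index_row(1) lessThan_iff)
    finally show ?thesis .
  qed
  have "(?A *\<^sub>v v) \<bullet>c v = (\<Sum>i<n. (?A *\<^sub>v v) $ i * cnj (v $ i))"
    using v by (simp add: cscalar_sum)
  also have "\<dots> = (\<Sum>i<n. (\<Sum>l<n. ?A $$ (i,l) * v $ l) * cnj (v $ i))"
    by (intro sum.cong refl) (simp only: Av lessThan_iff)
  also have "\<dots> = (\<Sum>i<n. \<Sum>l<n. ?A $$ (i,l) * v $ l * cnj (v $ i))"
    by (simp add: sum_distrib_right del: mult_entry)
  also have "\<dots> = (\<Sum>i<n. \<Sum>l<n. \<Sum>k<n. U $$ (i,k) * complex_of_real (d k) * cnj (U $$ (l,k)) * v $ l * cnj (v $ i))"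
  proof (intro sum.cong refl)
    fix i l assume "i \<in> {..<n}" "l \<in> {..<n}"
    then show "?A $$ (i,l) * v $ l * cnj (v $ i) = (\<Sum>k<n. U $$ (i,k) * complex_of_real (d k) * cnj (U $$ (l,k)) * v $ l * cnj (v $ i))"
      using U by (simp add: udu_entry sum_distrib_right del: mult_entry)
  qed
  also have "\<dots> = (\<Sum>i<n. \<Sum>k<n. \<Sum>l<n. U $$ (i,k) * complex_of_real (d k) * cnj (U $$ (l,k)) * v $ l * cnj (v $ i))"
    by (rule sum.cong[OF refl]) (rule sum.swap)
  also have "\<dots> = (\<Sum>k<n. \<Sum>i<n. \<Sum>l<n. U $$ (i,k) * complex_of_real (d k) * cnj (U $$ (l,k)) * v $ l * cnj (v $ i))"
    by (rule sum.swap)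
  also have "\<dots> = (\<Sum>k<n. complex_of_real (d k) * (w k * cnj (w k)))"
  proof (intro sum.cong refl)
    fix k
    have "cnj (w k) = (\<Sum>i<n. U $$ (i,k) * cnj (v $ i))" unfolding w_def by simp
    hence "complex_of_real (d k) * (w k * cnj (w k)) = complex_of_real (d k) * ((\<Sum>l<n. cnj (U $$ (l,k)) * v $ l) * (\<Sum>i<n. U $$ (i,k) * cnj (v $ i)))"
      unfolding w_def by simp
    also have "\<dots> = (\<Sum>i<n. \<Sum>l<n. U $$ (i,k) * complex_of_real (d k) * cnj (U $$ (l,k)) * v $ l * cnj (v $ i))"
      by (simp add: sum_product sum_distrib_left mult_ac)
    finally show "(\<Sum>i<n. \<Sum>l<n. U $$ (i,k) * complex_of_real (d k) * cnj (U $$ (l,k)) * v $ l * cnj (v $ i)) =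
       complex_of_real (d k) * (w k * cnj (w k))" by simp
  qed
  also have "\<dots> = complex_of_real (\<Sum>k<n. d k * (cmod (w k))^2)"
    by (simp add: complex_norm_square[symmetric])
  finally show ?thesis unfolding w_def .
qed

lemma psd_udu: assumes "unitary n U" "\<And>k. k < n \<Longrightarrow> 0 \<le> d k"
  shows "psd_mat n (U * dm n d * mat_adjoint U)"
  unfolding psd_mat_def hermitian_mat_def
proof (intro conjI ballI)
  have U: "U \<in> carrier_mat n n" using assms unitary_carrier by auto
  show "U * dm n d * mat_adjoint U \<in> carrier_mat n n" using U by simp
  show "mat_adjoint (U * dm n d * mat_adjoint U) = U * dm n d * mat_adjoint U" using herm_udu[OF U] .
  fix v :: "complex vec" assume v: "v \<in> carrier_vec n"
  have "0 \<le> (\<Sum>k<n. d k * (cmod (\<Sum>l<n. cnj (U $$ (l,k)) * v $ l))^2)"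
    using assms(2) by (intro sum_nonneg) simp
  then show "0 \<le> Re (((U * dm n d * mat_adjoint U) *\<^sub>v v) \<bullet>c v)"
    unfolding quad_form[OF U v] by simp
qed

lemma trace_udu: assumes "unitary n U"
  shows "mtrace (U * dm n d * mat_adjoint U) = complex_of_real (\<Sum>k<n. d k)"
proof -
  have U: "U \<in> carrier_mat n n" using assms unitary_carrier by auto
  have aUU: "mat_adjoint U * U = 1\<^sub>m n" using assms unfolding unitary_def by auto
  have col: "(\<Sum>i<n. cnj (U $$ (i,k)) * U $$ (i,k)) = 1" if "k < n" for k
  proof -
    have "(mat_adjoint U * U) $$ (k,k) = (\<Sum>i<n. cnj (U $$ (i,k)) * U $$ (i,k))" using U that by (simp add: mult_entry)
    then show ?thesis using aUU that by simp
  qed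
  have "mtrace (U * dm n d * mat_adjoint U) = (\<Sum>i<n. \<Sum>k<n. U $$ (i,k) * complex_of_real (d k) * cnj (U $$ (i,k)))"
    unfolding mtrace_def using U by (simp add: udu_entry del: mult_entry)
  also have "\<dots> = (\<Sum>k<n. \<Sum>i<n. U $$ (i,k) * complex_of_real (d k) * cnj (U $$ (i,k)))" by (rule sum.swap)
  also have "\<dots> = (\<Sum>k<n. complex_of_real (d k) * (\<Sum>i<n. cnj (U $$ (i,k)) * U $$ (i,k)))"
    by (simp add: sum_distrib_left mult_ac)
  also have "\<dots> = (\<Sum>k<n. complex_of_real (d k))" using col by simp
  finally show ?thesis by simp
qed

lemma eig_nonneg: assumes "unitary n U" "psd_mat n (U * dm n d * mat_adjoint U)" "k < n"
  shows "0 \<le> d k"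
proof -
  have U: "U \<in> carrier_mat n n" using assms unitary_carrier by auto
  have aUU: "mat_adjoint U * U = 1\<^sub>m n" using assms unfolding unitary_def by auto
  let ?v = "col U k"
  have v: "?v \<in> carrier_vec n" using U by (intro carrier_vecI) simp
  have w: "(\<Sum>l<n. cnj (U $$ (l,j)) * ?v $ l) = (if j = k then 1 else 0)" if "j < n" for j
  proof -
    have "(mat_adjoint U * U) $$ (j,k) = (\<Sum>l<n. cnj (U $$ (l,j)) * U $$ (l,k))" using U that assms(3) by (simp add: mult_entry)
    moreover have "(\<Sum>l<n. cnj (U $$ (l,j)) * ?v $ l) = (\<Sum>l<n. cnj (U $$ (l,j)) * U $$ (l,k))"
      using U assms(3) by (intro sum.cong refl) (simp add: carrier_matD)
    ultimately show ?thesis using aUU that assms(3) by simp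
  qed
  have "(\<Sum>j<n. d j * (cmod (\<Sum>l<n. cnj (U $$ (l,j)) * ?v $ l))^2) = (\<Sum>j<n. if j = k then d k else 0)"
    using w by (intro sum.cong refl) simp
  also have "\<dots> = d k" using assms(3) by simp
  finally have "Re (((U * dm n d * mat_adjoint U) *\<^sub>v ?v) \<bullet>c ?v) = d k"
    unfolding quad_form[OF U v] by simp
  moreover have "0 \<le> Re (((U * dm n d * mat_adjoint U) *\<^sub>v ?v) \<bullet>c ?v)"
    using assms(2) v unfolding psd_mat_def by blast
  ultimately show ?thesis by simp
qed

lemma concave_core:
  fixes w1 w2 :: "nat \<Rightarrow> nat \<Rightarrow> real" and d1 d2 s :: "nat \<Rightarrow> real" and p1 p2 :: real
  assumes w1: "\<And>i j. i < n \<Longrightarrow> j < n \<Longrightarrow> 0 \<le> w1 i j" and w2: "\<And>i j. i < n \<Longrightarrow> j < n \<Longrightarrow> 0 \<le> w2 i j"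
    and r1: "\<And>i. i < n \<Longrightarrow> (\<Sum>j<n. w1 i j) = 1" and r2: "\<And>i. i < n \<Longrightarrow> (\<Sum>j<n. w2 i j) = 1"
    and c1: "\<And>j. j < n \<Longrightarrow> (\<Sum>i<n. w1 i j) = 1" and c2: "\<And>j. j < n \<Longrightarrow> (\<Sum>i<n. w2 i j) = 1"
    and d1: "\<And>j. j < n \<Longrightarrow> 0 \<le> d1 j" and d2: "\<And>j. j < n \<Longrightarrow> 0 \<le> d2 j"
    and p: "0 \<le> p1" "0 \<le> p2" "p1 + p2 = 1"
    and s: "\<And>i. i < n \<Longrightarrow> s i = p1 * (\<Sum>j<n. w1 i j * d1 j) + p2 * (\<Sum>j<n. w2 i j * d2 j)"
  shows "(\<Sum>i<n. gl (s i)) \<le> p1 * (\<Sum>j<n. gl (d1 j)) + p2 * (\<Sum>j<n. gl (d2 j))"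
    and "0 < p1 \<Longrightarrow> 0 < p2 \<Longrightarrow> (\<Sum>i<n. gl (s i)) = p1 * (\<Sum>j<n. gl (d1 j)) + p2 * (\<Sum>j<n. gl (d2 j)) \<Longrightarrow>
      i < n \<Longrightarrow> (\<Sum>j<n. w1 i j * d1 j) = (\<Sum>j<n. w2 i j * d2 j) \<and>
        (\<forall>j<n. w1 i j > 0 \<longrightarrow> d1 j = (\<Sum>j<n. w1 i j * d1 j)) \<and>
        (\<forall>j<n. w2 i j > 0 \<longrightarrow> d2 j = (\<Sum>j<n. w2 i j * d2 j))"
proof -
  define C1 where "C1 i = (\<Sum>j<n. w1 i j * d1 j)" for i
  define C2 where "C2 i = (\<Sum>j<n. w2 i j * d2 j)" for i
  have C1p: "0 \<le> C1 i" if "i < n" for i unfolding C1_def using w1 d1 that by (intro sum_nonneg) simp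
  have C2p: "0 \<le> C2 i" if "i < n" for i unfolding C2_def using w2 d2 that by (intro sum_nonneg) simp
  define T1 where "T1 i = p1 * gl (C1 i) + p2 * gl (C2 i) - gl (s i)" for i
  define T21 where "T21 i = (\<Sum>j<n. w1 i j * gl (d1 j)) - gl (C1 i)" for i
  define T22 where "T22 i = (\<Sum>j<n. w2 i j * gl (d2 j)) - gl (C2 i)" for i
  have T1p: "0 \<le> T1 i" if i: "i < n" for i
  proof -
    have "gl (p1 * C1 i + p2 * C2 i) \<le> p1 * gl (C1 i) + p2 * gl (C2 i)"
      by (rule jensen2(1)[OF p C1p[OF i] C2p[OF i]])
    then show ?thesis unfolding T1_def s[OF i] C1_def C2_def by simp
  qed
  have J1: "gl (\<Sum>j\<in>{..<n}. w1 i j * d1 j) \<le> (\<Sum>j\<in>{..<n}. w1 i j * gl (d1 j))" if i: "i < n" for i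
    by (rule jensen_gl(1)) (use w1 i r1 d1 in auto)
  have J2: "gl (\<Sum>j\<in>{..<n}. w2 i j * d2 j) \<le> (\<Sum>j\<in>{..<n}. w2 i j * gl (d2 j))" if i: "i < n" for i
    by (rule jensen_gl(1)) (use w2 i r2 d2 in auto)
  have T21p: "0 \<le> T21 i" if "i < n" for i using J1[OF that] unfolding T21_def C1_def by simp
  have T22p: "0 \<le> T22 i" if "i < n" for i using J2[OF that] unfolding T22_def C2_def by simp
  have sw1: "(\<Sum>i<n. \<Sum>j<n. w1 i j * gl (d1 j)) = (\<Sum>j<n. gl (d1 j))"
  proof -
    have "(\<Sum>i<n. \<Sum>j<n. w1 i j * gl (d1 j)) = (\<Sum>j<n. \<Sum>i<n. w1 i j * gl (d1 j))" by (rule sum.swap)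
    also have "\<dots> = (\<Sum>j<n. (\<Sum>i<n. w1 i j) * gl (d1 j))" by (simp add: sum_distrib_right)
    also have "\<dots> = (\<Sum>j<n. gl (d1 j))" using c1 by simp
    finally show ?thesis .
  qed
  have sw2: "(\<Sum>i<n. \<Sum>j<n. w2 i j * gl (d2 j)) = (\<Sum>j<n. gl (d2 j))"
  proof -
    have "(\<Sum>i<n. \<Sum>j<n. w2 i j * gl (d2 j)) = (\<Sum>j<n. \<Sum>i<n. w2 i j * gl (d2 j))" by (rule sum.swap)
    also have "\<dots> = (\<Sum>j<n. (\<Sum>i<n. w2 i j) * gl (d2 j))" by (simp add: sum_distrib_right)
    also have "\<dots> = (\<Sum>j<n. gl (d2 j))" using c2 by simp
    finally show ?thesis .
  qed
  have key: "p1 * (\<Sum>j<n. gl (d1 j)) + p2 * (\<Sum>j<n. gl (d2 j)) - (\<Sum>i<n. gl (s i)) =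
     (\<Sum>i<n. T1 i) + p1 * (\<Sum>i<n. T21 i) + p2 * (\<Sum>i<n. T22 i)"
  proof -
    have h1: "(\<Sum>i<n. T1 i) = p1 * (\<Sum>i<n. gl (C1 i)) + p2 * (\<Sum>i<n. gl (C2 i)) - (\<Sum>i<n. gl (s i))"
      unfolding T1_def by (simp add: sum_subtractf sum.distrib sum_distrib_left)
    have "(\<Sum>i<n. T21 i) = (\<Sum>j<n. gl (d1 j)) - (\<Sum>i<n. gl (C1 i))"
      unfolding T21_def by (simp add: sum_subtractf sw1)
    hence h2: "(\<Sum>j<n. gl (d1 j)) = (\<Sum>i<n. T21 i) + (\<Sum>i<n. gl (C1 i))" by simp
    have "(\<Sum>i<n. T22 i) = (\<Sum>j<n. gl (d2 j)) - (\<Sum>i<n. gl (C2 i))"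
      unfolding T22_def by (simp add: sum_subtractf sw2)
    hence h3: "(\<Sum>j<n. gl (d2 j)) = (\<Sum>i<n. T22 i) + (\<Sum>i<n. gl (C2 i))" by simp
    show ?thesis unfolding h1 h2 h3 by (simp add: algebra_simps)
  qed
  have S1: "0 \<le> (\<Sum>i<n. T1 i)" using T1p by (intro sum_nonneg) simp
  have S21: "0 \<le> (\<Sum>i<n. T21 i)" using T21p by (intro sum_nonneg) simp
  have S22: "0 \<le> (\<Sum>i<n. T22 i)" using T22p by (intro sum_nonneg) simp
  have P1: "0 \<le> p1 * (\<Sum>i<n. T21 i)" using p(1) S21 by simp
  have P2: "0 \<le> p2 * (\<Sum>i<n. T22 i)" using p(2) S22 by simp
  show "(\<Sum>i<n. gl (s i)) \<le> p1 * (\<Sum>j<n. gl (d1 j)) + p2 * (\<Sum>j<n. gl (d2 j))"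
    using key S1 P1 P2 by linarith
  assume pp1: "0 < p1" and pp2: "0 < p2"
    and eq: "(\<Sum>i<n. gl (s i)) = p1 * (\<Sum>j<n. gl (d1 j)) + p2 * (\<Sum>j<n. gl (d2 j))" and i: "i < n"
  have z: "(\<Sum>i<n. T1 i) + p1 * (\<Sum>i<n. T21 i) + p2 * (\<Sum>i<n. T22 i) = 0" using key eq by linarith
  have z1: "(\<Sum>i<n. T1 i) = 0" using z S1 P1 P2 by linarith
  have "p1 * (\<Sum>i<n. T21 i) = 0" using z S1 P1 P2 by linarith
  hence z21: "(\<Sum>i<n. T21 i) = 0" using pp1 by simp
  have "p2 * (\<Sum>i<n. T22 i) = 0" using z S1 P1 P2 by linarith
  hence z22: "(\<Sum>i<n. T22 i) = 0" using pp2 by simp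
  have t1: "T1 i = 0" using z1 sum_nonneg_eq_0_iff[of "{..<n}" T1] T1p i by simp
  have t21: "T21 i = 0" using z21 sum_nonneg_eq_0_iff[of "{..<n}" T21] T21p i by simp
  have t22: "T22 i = 0" using z22 sum_nonneg_eq_0_iff[of "{..<n}" T22] T22p i by simp
  have "gl (p1 * C1 i + p2 * C2 i) = p1 * gl (C1 i) + p2 * gl (C2 i)"
    using t1 unfolding T1_def s[OF i] C1_def C2_def by simp
  hence CC: "C1 i = C2 i" using jensen2(2)[OF p C1p[OF i] C2p[OF i]] pp1 pp2 by simp
  have e1: "gl (\<Sum>j\<in>{..<n}. w1 i j * d1 j) = (\<Sum>j\<in>{..<n}. w1 i j * gl (d1 j))"
    using t21 unfolding T21_def C1_def by simp
  have e2: "gl (\<Sum>j\<in>{..<n}. w2 i j * d2 j) = (\<Sum>j\<in>{..<n}. w2 i j * gl (d2 j))"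
    using t22 unfolding T22_def C2_def by simp
  have A1: "\<forall>j<n. w1 i j > 0 \<longrightarrow> d1 j = (\<Sum>j<n. w1 i j * d1 j)"
  proof (intro allI impI)
    fix j assume j: "j < n" and wp: "w1 i j > 0"
    show "d1 j = (\<Sum>j<n. w1 i j * d1 j)"
      by (rule jensen_gl(2)[OF _ _ _ _ e1]) (use w1 i r1 d1 j wp in auto)
  qed
  have A2: "\<forall>j<n. w2 i j > 0 \<longrightarrow> d2 j = (\<Sum>j<n. w2 i j * d2 j)"
  proof (intro allI impI)
    fix j assume j: "j < n" and wp: "w2 i j > 0"
    show "d2 j = (\<Sum>j<n. w2 i j * d2 j)"
      by (rule jensen_gl(2)[OF _ _ _ _ e2]) (use w2 i r2 d2 j wp in auto)
  qed
  show "(\<Sum>j<n. w1 i j * d1 j) = (\<Sum>j<n. w2 i j * d2 j) \<and>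
        (\<forall>j<n. w1 i j > 0 \<longrightarrow> d1 j = (\<Sum>j<n. w1 i j * d1 j)) \<and>
        (\<forall>j<n. w2 i j > 0 \<longrightarrow> d2 j = (\<Sum>j<n. w2 i j * d2 j))"
    using CC A1 A2 unfolding C1_def C2_def by blast
qed

lemma assoc5: assumes A: "A \<in> carrier_mat n n" and B: "B \<in> carrier_mat n n" and C: "C \<in> carrier_mat n n"
  and D: "D \<in> carrier_mat n n" and E: "E \<in> carrier_mat n n"
  shows "A * (B * C * D) * E = (A * B) * C * (D * E)"
proof -
  have BC: "B * C \<in> carrier_mat n n" and BCD: "B * C * D \<in> carrier_mat n n" and DE: "D * E \<in> carrier_mat n n"
    using B C D E by auto
  have 1: "A * (B*C*D) * E = A * ((B*C*D) * E)" by (rule assoc_mult_mat[OF A BCD E])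
  have 2: "(B*C*D) * E = (B*C) * (D*E)" by (rule assoc_mult_mat[OF BC D E])
  have 3: "A * ((B*C)*(D*E)) = (A*(B*C))*(D*E)" by (rule assoc_mult_mat[OF A BC DE, symmetric])
  have 4: "A*(B*C) = A*B*C" by (rule assoc_mult_mat[OF A B C, symmetric])
  have "A * (B * C * D) * E = A * ((B*C) * (D*E))" unfolding 1 2 ..
  also have "\<dots> = (A*(B*C))*(D*E)" by (rule 3)
  also have "\<dots> = A*B*C*(D*E)" unfolding 4 ..
  finally show ?thesis .
qed

lemma conj_udu: assumes Q: "Q \<in> carrier_mat n n" and P: "P \<in> carrier_mat n n"
  shows "mat_adjoint Q * (P * dm n d * mat_adjoint P) * Q = (mat_adjoint Q * P) * dm n d * mat_adjoint (mat_adjoint Q * P)"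
proof -
  have "mat_adjoint (mat_adjoint Q * P) = mat_adjoint P * Q" using Q P by (simp add: adj_mult)
  then show ?thesis using Q P by (simp add: assoc5[of _ n])
qed

lemma conj_lin: assumes Q: "Q \<in> carrier_mat n n" and X: "X \<in> carrier_mat n n" and Y: "Y \<in> carrier_mat n n"
  shows "mat_adjoint Q * (a \<cdot>\<^sub>m X + b \<cdot>\<^sub>m Y) * Q = a \<cdot>\<^sub>m (mat_adjoint Q * X * Q) + b \<cdot>\<^sub>m (mat_adjoint Q * Y * Q)"
proof -
  have aQ: "mat_adjoint Q \<in> carrier_mat n n" using Q by simp
  have "mat_adjoint Q * (a \<cdot>\<^sub>m X + b \<cdot>\<^sub>m Y) = a \<cdot>\<^sub>m (mat_adjoint Q * X) + b \<cdot>\<^sub>m (mat_adjoint Q * Y)"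
    using mult_add_distrib_mat[OF aQ smult_carrier_mat[OF X] smult_carrier_mat[OF Y]]
      mult_smult_distrib[OF aQ X] mult_smult_distrib[OF aQ Y] by simp
  moreover have "(a \<cdot>\<^sub>m (mat_adjoint Q * X) + b \<cdot>\<^sub>m (mat_adjoint Q * Y)) * Q =
     a \<cdot>\<^sub>m (mat_adjoint Q * X) * Q + b \<cdot>\<^sub>m (mat_adjoint Q * Y) * Q"
    using aQ X Y Q by (intro add_mult_distrib_mat[of _ n n]) auto
  moreover have "a \<cdot>\<^sub>m (mat_adjoint Q * X) * Q = a \<cdot>\<^sub>m (mat_adjoint Q * X * Q)"
    using aQ X Q by (intro mult_smult_assoc_mat[of _ n n]) auto
  moreover have "b \<cdot>\<^sub>m (mat_adjoint Q * Y) * Q = b \<cdot>\<^sub>m (mat_adjoint Q * Y * Q)"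
    using aQ Y Q by (intro mult_smult_assoc_mat[of _ n n]) auto
  ultimately show ?thesis by simp
qed

lemma unitary_rows: assumes "unitary n M" "i < n" shows "(\<Sum>j<n. (cmod (M $$ (i,j)))^2) = 1"
proof -
  have M: "M \<in> carrier_mat n n" and MM: "M * mat_adjoint M = 1\<^sub>m n" using assms unfolding unitary_def by auto
  have "(M * mat_adjoint M) $$ (i,i) = (\<Sum>j<n. M $$ (i,j) * cnj (M $$ (i,j)))" using M assms(2) by (simp add: mult_entry)
  also have "\<dots> = complex_of_real (\<Sum>j<n. (cmod (M $$ (i,j)))^2)" unfolding of_real_sum complex_norm_square ..
  finally have h: "(M * mat_adjoint M) $$ (i,i) = complex_of_real (\<Sum>j<n. (cmod (M $$ (i,j)))^2)" .
  have h2: "(M * mat_adjoint M) $$ (i,i) = 1" using MM assms(2) by simp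
  have "complex_of_real (\<Sum>j<n. (cmod (M $$ (i,j)))^2) = 1" using h h2 by metis
  then show ?thesis by (simp only: of_real_eq_1_iff)
qed

lemma unitary_cols: assumes "unitary n M" "j < n" shows "(\<Sum>i<n. (cmod (M $$ (i,j)))^2) = 1"
proof -
  have M: "M \<in> carrier_mat n n" and MM: "mat_adjoint M * M = 1\<^sub>m n" using assms unfolding unitary_def by auto
  have "(mat_adjoint M * M) $$ (j,j) = (\<Sum>i<n. cnj (M $$ (i,j)) * M $$ (i,j))" using M assms(2) by (simp add: mult_entry)
  also have "\<dots> = complex_of_real (\<Sum>i<n. (cmod (M $$ (i,j)))^2)" unfolding of_real_sum complex_norm_square
    by (simp add: mult.commute)
  finally have h: "(mat_adjoint M * M) $$ (j,j) = complex_of_real (\<Sum>i<n. (cmod (M $$ (i,j)))^2)" .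
  have h2: "(mat_adjoint M * M) $$ (j,j) = 1" using MM assms(2) by simp
  have "complex_of_real (\<Sum>i<n. (cmod (M $$ (i,j)))^2) = 1" using h h2 by metis
  then show ?thesis by (simp only: of_real_eq_1_iff)
qed

lemma udu_diag: assumes "M \<in> carrier_mat n n" "i < n"
  shows "(M * dm n d * mat_adjoint M) $$ (i,i) = complex_of_real (\<Sum>j<n. (cmod (M $$ (i,j)))^2 * d j)"
proof -
  have "(M * dm n d * mat_adjoint M) $$ (i,i) = (\<Sum>j<n. M $$ (i,j) * complex_of_real (d j) * cnj (M $$ (i,j)))"
    using udu_entry[OF assms(1) assms(2) assms(2)] .
  also have "\<dots> = (\<Sum>j<n. complex_of_real ((cmod (M $$ (i,j)))^2 * d j))"
  proof (intro sum.cong refl)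
    fix j
    have e: "M $$ (i,j) * cnj (M $$ (i,j)) = complex_of_real ((cmod (M $$ (i,j)))^2)" by (rule complex_norm_square[symmetric])
    have "M $$ (i,j) * complex_of_real (d j) * cnj (M $$ (i,j)) = (M $$ (i,j) * cnj (M $$ (i,j))) * complex_of_real (d j)"
      by (simp only: mult_ac)
    also have "\<dots> = complex_of_real ((cmod (M $$ (i,j)))^2) * complex_of_real (d j)" by (simp only: e)
    also have "\<dots> = complex_of_real ((cmod (M $$ (i,j)))^2 * d j)" by (simp only: of_real_mult)
    finally show "M $$ (i,j) * complex_of_real (d j) * cnj (M $$ (i,j)) = complex_of_real ((cmod (M $$ (i,j)))^2 * d j)" .
  qed
  finally show ?thesis by (simp only: of_real_sum)
qed

lemma diag_from_eq: assumes uM: "unitary n M"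
  and h: "\<And>i j. i < n \<Longrightarrow> j < n \<Longrightarrow> (cmod (M $$ (i,j)))^2 > 0 \<Longrightarrow> d j = c i"
  shows "M * dm n d * mat_adjoint M = dm n c"
proof (rule eq_matI)
  have M: "M \<in> carrier_mat n n" and MM: "M * mat_adjoint M = 1\<^sub>m n" using uM unfolding unitary_def by auto
  fix i k assume i: "i < dim_row (dm n c)" and k: "k < dim_col (dm n c)"
  hence i: "i < n" and k: "k < n" by auto
  have "(M * dm n d * mat_adjoint M) $$ (i,k) = (\<Sum>j<n. M $$ (i,j) * complex_of_real (d j) * cnj (M $$ (k,j)))"
    using udu_entry[OF M i k] .
  also have "\<dots> = (\<Sum>j<n. complex_of_real (c i) * (M $$ (i,j) * cnj (M $$ (k,j))))"
  proof (intro sum.cong refl)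
    fix j assume j: "j \<in> {..<n}"
    show "M $$ (i,j) * complex_of_real (d j) * cnj (M $$ (k,j)) = complex_of_real (c i) * (M $$ (i,j) * cnj (M $$ (k,j)))"
    proof (cases "M $$ (i,j) = 0")
      case True then show ?thesis by simp
    next
      case False
      hence "(cmod (M $$ (i,j)))^2 > 0" by simp
      hence "d j = c i" using h i j by simp
      then show ?thesis by (simp add: mult_ac)
    qed
  qed
  also have "\<dots> = complex_of_real (c i) * (M * mat_adjoint M) $$ (i,k)"
    using M i k by (simp add: mult_entry sum_distrib_left)
  also have "\<dots> = dm n c $$ (i,k)" using MM i k by (simp add: dm_index)
  finally show "(M * dm n d * mat_adjoint M) $$ (i,k) = dm n c $$ (i,k)" .
qed (use uM unitary_carrier in auto)

lemma unconj: assumes "unitary n Q" "A \<in> carrier_mat n n"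
  shows "Q * (mat_adjoint Q * A * Q) * mat_adjoint Q = A"
proof -
  have Q: "Q \<in> carrier_mat n n" and aQ: "mat_adjoint Q \<in> carrier_mat n n" using assms unitary_carrier by auto
  have QQ: "Q * mat_adjoint Q = 1\<^sub>m n" using assms unfolding unitary_def by auto
  have "Q * (mat_adjoint Q * A * Q) * mat_adjoint Q = (Q * mat_adjoint Q) * A * (Q * mat_adjoint Q)"
    using assoc5[OF Q aQ assms(2) Q aQ] .
  also have "\<dots> = A" using QQ assms(2) by simp
  finally show ?thesis .
qed

lemma concavity:
  assumes uQ: "unitary n Q" and uP1: "unitary n P1" and uP2: "unitary n P2"
   and d1: "\<And>j. j < n \<Longrightarrow> 0 \<le> d1 j" and d2: "\<And>j. j < n \<Longrightarrow> 0 \<le> d2 j"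
   and p: "0 \<le> p1" "0 \<le> p2" "p1 + p2 = 1"
   and sig: "Q * dm n s * mat_adjoint Q = complex_of_real p1 \<cdot>\<^sub>m (P1 * dm n d1 * mat_adjoint P1)
      + complex_of_real p2 \<cdot>\<^sub>m (P2 * dm n d2 * mat_adjoint P2)"
  shows "(\<Sum>i<n. gl (s i)) \<le> p1 * (\<Sum>j<n. gl (d1 j)) + p2 * (\<Sum>j<n. gl (d2 j))"
   and "p1 = 1/2 \<Longrightarrow> p2 = 1/2 \<Longrightarrow> (\<Sum>i<n. gl (s i)) = p1 * (\<Sum>j<n. gl (d1 j)) + p2 * (\<Sum>j<n. gl (d2 j)) \<Longrightarrow>
        P1 * dm n d1 * mat_adjoint P1 = P2 * dm n d2 * mat_adjoint P2"
proof -
  have Q: "Q \<in> carrier_mat n n" and P1: "P1 \<in> carrier_mat n n" and P2: "P2 \<in> carrier_mat n n"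
    using uQ uP1 uP2 unitary_carrier by auto
  have aQ: "mat_adjoint Q \<in> carrier_mat n n" using Q by simp
  define M1 where "M1 = mat_adjoint Q * P1"
  define M2 where "M2 = mat_adjoint Q * P2"
  have uM1: "unitary n M1" unfolding M1_def by (rule unitary_mult[OF unitary_adj[OF uQ] uP1])
  have uM2: "unitary n M2" unfolding M2_def by (rule unitary_mult[OF unitary_adj[OF uQ] uP2])
  have M1: "M1 \<in> carrier_mat n n" and M2: "M2 \<in> carrier_mat n n" using uM1 uM2 unitary_carrier by auto
  define w1 where "w1 i j = (cmod (M1 $$ (i,j)))^2" for i j
  define w2 where "w2 i j = (cmod (M2 $$ (i,j)))^2" for i j
  have QQ: "mat_adjoint Q * Q = 1\<^sub>m n" using uQ unfolding unitary_def by auto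
  have D: "mat_adjoint Q * (Q * dm n s * mat_adjoint Q) * Q = dm n s"
    using assoc5[OF aQ Q dm_carrier aQ Q] QQ by simp
  have C1: "mat_adjoint Q * (P1 * dm n d1 * mat_adjoint P1) * Q = M1 * dm n d1 * mat_adjoint M1"
    unfolding M1_def by (rule conj_udu[OF Q P1])
  have C2: "mat_adjoint Q * (P2 * dm n d2 * mat_adjoint P2) * Q = M2 * dm n d2 * mat_adjoint M2"
    unfolding M2_def by (rule conj_udu[OF Q P2])
  have DD: "dm n s = complex_of_real p1 \<cdot>\<^sub>m (M1 * dm n d1 * mat_adjoint M1) + complex_of_real p2 \<cdot>\<^sub>m (M2 * dm n d2 * mat_adjoint M2)"
    using D unfolding sig conj_lin[OF Q udu_carrier[OF P1] udu_carrier[OF P2]] C1 C2 by simp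
  have s: "s i = p1 * (\<Sum>j<n. w1 i j * d1 j) + p2 * (\<Sum>j<n. w2 i j * d2 j)" if i: "i < n" for i
  proof -
    have "complex_of_real (s i) = dm n s $$ (i,i)" using i by (simp add: dm_index)
    also have "\<dots> = complex_of_real p1 * (M1 * dm n d1 * mat_adjoint M1) $$ (i,i) + complex_of_real p2 * (M2 * dm n d2 * mat_adjoint M2) $$ (i,i)"
      unfolding DD using i M1 M2 by (simp del: mult_entry)
    also have "\<dots> = complex_of_real (p1 * (\<Sum>j<n. w1 i j * d1 j) + p2 * (\<Sum>j<n. w2 i j * d2 j))"
      unfolding udu_diag[OF M1 i] udu_diag[OF M2 i] w1_def w2_def by simp
    finally show ?thesis by (simp only: of_real_eq_iff)
  qed
  note core = concave_core[of n w1 w2 d1 d2 p1 p2 s]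
  have hyps: "\<And>i j. i < n \<Longrightarrow> j < n \<Longrightarrow> 0 \<le> w1 i j" "\<And>i j. i < n \<Longrightarrow> j < n \<Longrightarrow> 0 \<le> w2 i j"
    "\<And>i. i < n \<Longrightarrow> (\<Sum>j<n. w1 i j) = 1" "\<And>i. i < n \<Longrightarrow> (\<Sum>j<n. w2 i j) = 1"
    "\<And>j. j < n \<Longrightarrow> (\<Sum>i<n. w1 i j) = 1" "\<And>j. j < n \<Longrightarrow> (\<Sum>i<n. w2 i j) = 1"
    unfolding w1_def w2_def using unitary_rows[OF uM1] unitary_rows[OF uM2] unitary_cols[OF uM1] unitary_cols[OF uM2]
    by auto
  show "(\<Sum>i<n. gl (s i)) \<le> p1 * (\<Sum>j<n. gl (d1 j)) + p2 * (\<Sum>j<n. gl (d2 j))"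
    by (rule core(1)[OF hyps d1 d2 p s])
  assume h1: "p1 = 1/2" and h2: "p2 = 1/2"
    and eq: "(\<Sum>i<n. gl (s i)) = p1 * (\<Sum>j<n. gl (d1 j)) + p2 * (\<Sum>j<n. gl (d2 j))"
  have pp: "0 < p1" "0 < p2" using h1 h2 by auto
  note E = core(2)[OF hyps d1 d2 p s pp eq]
  define c where "c i = (\<Sum>j<n. w1 i j * d1 j)" for i
  have e1: "M1 * dm n d1 * mat_adjoint M1 = dm n c"
  proof (rule diag_from_eq[OF uM1])
    fix i j assume "i < n" "j < n" "(cmod (M1 $$ (i,j)))^2 > 0"
    then show "d1 j = c i" using E[of i] unfolding c_def w1_def by blast
  qed
  have e2: "M2 * dm n d2 * mat_adjoint M2 = dm n c"
  proof (rule diag_from_eq[OF uM2])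
    fix i j assume "i < n" "j < n" "(cmod (M2 $$ (i,j)))^2 > 0"
    then show "d2 j = c i" using E[of i] unfolding c_def w2_def by auto
  qed
  have "P1 * dm n d1 * mat_adjoint P1 = Q * (mat_adjoint Q * (P1 * dm n d1 * mat_adjoint P1) * Q) * mat_adjoint Q"
    using unconj[OF uQ udu_carrier[OF P1]] by simp
  also have "\<dots> = Q * dm n c * mat_adjoint Q" unfolding C1 e1 ..
  also have "\<dots> = Q * (mat_adjoint Q * (P2 * dm n d2 * mat_adjoint P2) * Q) * mat_adjoint Q" unfolding C2 e2 ..
  also have "\<dots> = P2 * dm n d2 * mat_adjoint P2" using unconj[OF uQ udu_carrier[OF P2]] .
  finally show "P1 * dm n d1 * mat_adjoint P1 = P2 * dm n d2 * mat_adjoint P2" .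
qed

definition rr :: complex where "rr = 1 / complex_of_real (sqrt 2)"

lemma rr_sq: "rr * rr = 1/2"
proof -
  have "complex_of_real (sqrt 2) * complex_of_real (sqrt 2) = 2"
    by (simp flip: of_real_mult)
  then show ?thesis unfolding rr_def by (simp add: field_simps)
qed

lemma cnj_rr[simp]: "cnj rr = rr" unfolding rr_def by simp

lemma rr_sq'[simp]: "rr * (rr * x) = x / 2" using rr_sq by (simp add: mult.assoc[symmetric])
lemma rr_sq''[simp]: "rr * rr = 1/2" using rr_sq .

lemma less4E: "(i::nat) < 4 \<Longrightarrow> (i = 0 \<Longrightarrow> P) \<Longrightarrow> (i = 1 \<Longrightarrow> P) \<Longrightarrow> (i = 2 \<Longrightarrow> P) \<Longrightarrow> (i = 3 \<Longrightarrow> P) \<Longrightarrow> P"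
  by linarith

lemma less2E: "(i::nat) < 2 \<Longrightarrow> (i = 0 \<Longrightarrow> P) \<Longrightarrow> (i = 1 \<Longrightarrow> P) \<Longrightarrow> P"
  by linarith

lemma sum4: "(\<Sum>k<(4::nat). f k) = f 0 + f 1 + f 2 + (f 3 :: 'a :: comm_monoid_add)"
  by (simp add: eval_nat_numeral)

lemma sum2: "(\<Sum>k<(2::nat). f k) = f 0 + (f 1 :: 'a :: comm_monoid_add)"
  by (simp add: eval_nat_numeral)

definition V1 :: "complex mat" where
  "V1 = mat 4 4 (\<lambda>(i,j). if j = 0 then (if i = 0 then 1 else 0)
        else if j = 1 then (if i = 1 \<or> i = 2 then rr else 0)
        else if j = 3 then (if i = 3 then 1 else 0) else 0)"

definition V2 :: "complex mat" where
  "V2 = mat 4 4 (\<lambda>(i,j). if j = 2 then (if i = 1 then rr else if i = 2 then - rr else 0) else 0)"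

definition E1 :: "complex mat" where "E1 = dm 4 (\<lambda>k. if k = 1 then 1 else 0)"
definition E2 :: "complex mat" where "E2 = dm 4 (\<lambda>k. if k = 2 then 1 else 0)"
definition F0 :: "complex mat" where "F0 = dm 2 (\<lambda>k. if k = 0 then 1 else 0)"
definition F1 :: "complex mat" where "F1 = dm 2 (\<lambda>k. if k = 1 then 1 else 0)"

lemma V1_carrier[simp]: "V1 \<in> carrier_mat 4 4" by (simp add: V1_def)
lemma V2_carrier[simp]: "V2 \<in> carrier_mat 4 4" by (simp add: V2_def)
lemma E1_carrier[simp]: "E1 \<in> carrier_mat 4 4" by (simp add: E1_def)
lemma E2_carrier[simp]: "E2 \<in> carrier_mat 4 4" by (simp add: E2_def)
lemma dims4[simp]: "dim_row V1 = 4" "dim_col V1 = 4" "dim_row V2 = 4" "dim_col V2 = 4"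
  "dim_row E1 = 4" "dim_col E1 = 4" "dim_row E2 = 4" "dim_col E2 = 4"
  by (auto simp: V1_def V2_def E1_def E2_def)

lemma pp_carrier[simp]: "proj psi_plus \<in> carrier_mat 4 4" "proj psi_minus \<in> carrier_mat 4 4"
  by (auto simp: proj_def psi_plus_def psi_minus_def)

lemma pp_dims[simp]: "dim_row (proj psi_plus) = 4" "dim_col (proj psi_plus) = 4"
   "dim_row (proj psi_minus) = 4" "dim_col (proj psi_minus) = 4"
  by (auto simp: proj_def psi_plus_def psi_minus_def)

lemma pplus_index: "i < 4 \<Longrightarrow> j < 4 \<Longrightarrow> proj psi_plus $$ (i,j) =
   (if (i = 1 \<or> i = 2) \<and> (j = 1 \<or> j = 2) then 1/2 else 0)"
  by (simp add: proj_def psi_plus_def rr_def[symmetric])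

lemma pminus_index: "i < 4 \<Longrightarrow> j < 4 \<Longrightarrow> proj psi_minus $$ (i,j) =
   (if (i = 1 \<or> i = 2) \<and> (j = 1 \<or> j = 2) then (if i = j then 1/2 else -1/2) else 0)"
  by (auto simp: proj_def psi_minus_def rr_def[symmetric])

lemma V1_index: "i < 4 \<Longrightarrow> j < 4 \<Longrightarrow> V1 $$ (i,j) = (if j = 0 then (if i = 0 then 1 else 0)
        else if j = 1 then (if i = 1 \<or> i = 2 then rr else 0)
        else if j = 3 then (if i = 3 then 1 else 0) else 0)" by (simp add: V1_def)
lemma V2_index: "i < 4 \<Longrightarrow> j < 4 \<Longrightarrow> V2 $$ (i,j) = (if j = 2 then (if i = 1 then rr else if i = 2 then - rr else 0) else 0)"
  by (simp add: V2_def)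

lemmas idx4 = V1_index V2_index pplus_index pminus_index

lemma f1: "mat_adjoint V1 * V1 + mat_adjoint V2 * V2 = 1\<^sub>m 4"
  by (rule eq_matI) (auto simp: mult_entry sum4 idx4 elim!: less4E)

lemma f2: "mat_adjoint V1 * V2 = 0\<^sub>m 4 4"
  by (rule eq_matI) (auto simp: mult_entry sum4 idx4 elim!: less4E)

lemma f3: "mat_adjoint V2 * V1 = 0\<^sub>m 4 4"
  by (rule eq_matI) (auto simp: mult_entry sum4 idx4 elim!: less4E)

lemma f4: "V1 * E1 * mat_adjoint V1 = proj psi_plus"
  by (rule eq_matI) (auto simp: mult_entry sum4 idx4 E1_def dm_index elim!: less4E)

lemma f5: "V2 * E2 * mat_adjoint V2 = proj psi_minus"
  by (rule eq_matI) (auto simp: mult_entry sum4 idx4 E2_def dm_index elim!: less4E)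

lemma f6: "V2 * E1 = 0\<^sub>m 4 4"
  by (rule eq_matI) (auto simp: mult_entry sum4 idx4 E1_def dm_index elim!: less4E)

lemma f7: "V1 * E2 = 0\<^sub>m 4 4"
  by (rule eq_matI) (auto simp: mult_entry sum4 idx4 E2_def dm_index elim!: less4E)

lemma f8: "V1 * E1 * mat_adjoint V2 = 0\<^sub>m 4 4"
  by (rule eq_matI) (auto simp: mult_entry sum4 idx4 E1_def dm_index elim!: less4E)

lemma f9: "V2 * E2 * mat_adjoint V1 = 0\<^sub>m 4 4"
  by (rule eq_matI) (auto simp: mult_entry sum4 idx4 E2_def dm_index elim!: less4E)

lemma kk_mult:
  assumes A1: "A1 \<in> carrier_mat a a" and A2: "A2 \<in> carrier_mat a a" and C1: "C1 \<in> carrier_mat a a" and C2: "C2 \<in> carrier_mat a a"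
    and B1: "B1 \<in> carrier_mat b b" and B2: "B2 \<in> carrier_mat b b" and D1: "D1 \<in> carrier_mat b b" and D2: "D2 \<in> carrier_mat b b"
  shows "(kron A1 B1 + kron A2 B2) * (kron C1 D1 + kron C2 D2) =
     (kron (A1*C1) (B1*D1) + kron (A1*C2) (B1*D2)) + (kron (A2*C1) (B2*D1) + kron (A2*C2) (B2*D2))"
proof -
  have k: "kron X Y \<in> carrier_mat (a*b) (a*b)" if "X \<in> carrier_mat a a" "Y \<in> carrier_mat b b" for X Y
    using that by simp
  have "(kron A1 B1 + kron A2 B2) * (kron C1 D1 + kron C2 D2) =
     kron A1 B1 * (kron C1 D1 + kron C2 D2) + kron A2 B2 * (kron C1 D1 + kron C2 D2)"
    by (rule add_mult_distrib_mat[OF k[OF A1 B1] k[OF A2 B2] add_carrier_mat[OF k[OF C2 D2]]])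
  also have "kron A1 B1 * (kron C1 D1 + kron C2 D2) = kron A1 B1 * kron C1 D1 + kron A1 B1 * kron C2 D2"
    by (rule mult_add_distrib_mat[OF k[OF A1 B1] k[OF C1 D1] k[OF C2 D2]])
  also have "kron A2 B2 * (kron C1 D1 + kron C2 D2) = kron A2 B2 * kron C1 D1 + kron A2 B2 * kron C2 D2"
    by (rule mult_add_distrib_mat[OF k[OF A2 B2] k[OF C1 D1] k[OF C2 D2]])
  finally show ?thesis using A1 A2 C1 C2 B1 B2 D1 D2 by (simp add: kron_mult)
qed

lemma add_zero_eq: "dim_row X = r \<Longrightarrow> dim_col X = c \<Longrightarrow> X + 0\<^sub>m r c = (X :: complex mat)"
  "dim_row X = r \<Longrightarrow> dim_col X = c \<Longrightarrow> 0\<^sub>m r c + X = X"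
  by (rule eq_matI; auto)+

lemma scal_udu: assumes Q: "Q \<in> carrier_mat n n"
  shows "Q * (c \<cdot>\<^sub>m dm n e) * mat_adjoint Q = c \<cdot>\<^sub>m (Q * dm n e * mat_adjoint Q)"
proof -
  have "Q * (c \<cdot>\<^sub>m dm n e) = c \<cdot>\<^sub>m (Q * dm n e)" by (rule mult_smult_distrib[OF Q dm_carrier])
  moreover have "c \<cdot>\<^sub>m (Q * dm n e) * mat_adjoint Q = c \<cdot>\<^sub>m (Q * dm n e * mat_adjoint Q)"
    by (rule mult_smult_assoc_mat[of _ n n _ n]) (use Q in auto)
  ultimately show ?thesis by simp
qed

lemma dm_add: "dm n f + dm n g = dm n (\<lambda>k. f k + g k)"
  by (rule eq_matI) (auto simp: dm_index)

lemma dm_smult: "complex_of_real c \<cdot>\<^sub>m dm n f = dm n (\<lambda>k. c * f k)"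
  by (rule eq_matI) (auto simp: dm_index)

context
  fixes n :: nat and Q1 Q2 :: "complex mat"
  assumes uQ1: "unitary n Q1" and uQ2: "unitary n Q2"
begin

definition "WW = kron Q1 V1 + kron Q2 V2"

lemma Q12: "Q1 \<in> carrier_mat n n" "Q2 \<in> carrier_mat n n" "mat_adjoint Q1 \<in> carrier_mat n n" "mat_adjoint Q2 \<in> carrier_mat n n"
  using uQ1 uQ2 unitary_carrier by auto

lemma aWW: "mat_adjoint WW = kron (mat_adjoint Q1) (mat_adjoint V1) + kron (mat_adjoint Q2) (mat_adjoint V2)"
  unfolding WW_def using Q12 by (simp add: adj_add[of _ "n*4" "n*4"] adj_kron)

lemma unitary_WW: "unitary (n*4) WW"
proof (rule unitaryI)
  show "WW \<in> carrier_mat (n*4) (n*4)" unfolding WW_def using Q12 by simp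
  have "mat_adjoint WW * WW =
     (kron (mat_adjoint Q1 * Q1) (mat_adjoint V1 * V1) + kron (mat_adjoint Q1 * Q2) (mat_adjoint V1 * V2)) +
     (kron (mat_adjoint Q2 * Q1) (mat_adjoint V2 * V1) + kron (mat_adjoint Q2 * Q2) (mat_adjoint V2 * V2))"
    unfolding aWW unfolding WW_def using Q12 by (intro kk_mult) auto
  also have "\<dots> = kron (1\<^sub>m n) (mat_adjoint V1 * V1) + kron (1\<^sub>m n) (mat_adjoint V2 * V2)"
    using uQ1 uQ2 Q12 unfolding unitary_def f2 f3 by (simp add: kron_zero2 add_zero_eq carrier_matD)
  also have "\<dots> = kron (1\<^sub>m n) (mat_adjoint V1 * V1 + mat_adjoint V2 * V2)"
    by (rule kron_add2[of _ 4 4, symmetric]) auto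
  also have "\<dots> = 1\<^sub>m (n*4)" unfolding f1 kron_one ..
  finally show "mat_adjoint WW * WW = 1\<^sub>m (n*4)" .
qed

lemma WW_rho:
  "WW * (kron (dm n (\<lambda>i. p1 * e1 i)) E1 + kron (dm n (\<lambda>i. p2 * e2 i)) E2) * mat_adjoint WW =
   complex_of_real p1 \<cdot>\<^sub>m kron (Q1 * dm n e1 * mat_adjoint Q1) (proj psi_plus)
   + complex_of_real p2 \<cdot>\<^sub>m kron (Q2 * dm n e2 * mat_adjoint Q2) (proj psi_minus)"
proof -
  let ?D1 = "dm n (\<lambda>i. p1 * e1 i)" and ?D2 = "dm n (\<lambda>i. p2 * e2 i)"
  have "WW * (kron ?D1 E1 + kron ?D2 E2) =
     (kron (Q1 * ?D1) (V1 * E1) + kron (Q1 * ?D2) (V1 * E2)) + (kron (Q2 * ?D1) (V2 * E1) + kron (Q2 * ?D2) (V2 * E2))"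
    unfolding WW_def using Q12 by (intro kk_mult) auto
  also have "\<dots> = kron (Q1 * ?D1) (V1 * E1) + kron (Q2 * ?D2) (V2 * E2)"
    unfolding f6 f7 using Q12 by (simp add: kron_zero2 add_zero_eq carrier_matD)
  finally have 1: "WW * (kron ?D1 E1 + kron ?D2 E2) = kron (Q1 * ?D1) (V1 * E1) + kron (Q2 * ?D2) (V2 * E2)" .
  have "(kron (Q1 * ?D1) (V1 * E1) + kron (Q2 * ?D2) (V2 * E2)) * mat_adjoint WW =
    (kron (Q1 * ?D1 * mat_adjoint Q1) (V1 * E1 * mat_adjoint V1) + kron (Q1 * ?D1 * mat_adjoint Q2) (V1 * E1 * mat_adjoint V2)) +
    (kron (Q2 * ?D2 * mat_adjoint Q1) (V2 * E2 * mat_adjoint V1) + kron (Q2 * ?D2 * mat_adjoint Q2) (V2 * E2 * mat_adjoint V2))"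
    unfolding aWW using Q12 by (intro kk_mult) auto
  also have "\<dots> = kron (Q1 * ?D1 * mat_adjoint Q1) (proj psi_plus) + kron (Q2 * ?D2 * mat_adjoint Q2) (proj psi_minus)"
    unfolding f4 f5 f8 f9 using Q12 by (simp add: kron_zero2 add_zero_eq carrier_matD)
  also have "Q1 * ?D1 * mat_adjoint Q1 = complex_of_real p1 \<cdot>\<^sub>m (Q1 * dm n e1 * mat_adjoint Q1)"
    unfolding dm_smult[symmetric] using Q12 by (simp add: scal_udu)
  also have "Q2 * ?D2 * mat_adjoint Q2 = complex_of_real p2 \<cdot>\<^sub>m (Q2 * dm n e2 * mat_adjoint Q2)"
    unfolding dm_smult[symmetric] using Q12 by (simp add: scal_udu)
  finally show ?thesis unfolding 1 kron_smult1 .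
qed

end

lemma Dg_dm: "kron (dm n (\<lambda>i. p1 * e1 i)) E1 + kron (dm n (\<lambda>i. p2 * e2 i)) E2 =
  dm (n*4) (\<lambda>k. p1 * e1 (k div 4) * (if k mod 4 = 1 then 1 else 0) + p2 * e2 (k div 4) * (if k mod 4 = 2 then 1 else 0))"
  unfolding E1_def E2_def kron_dm dm_add by simp

lemma gl0[simp]: "gl 0 = 0" by (simp add: gl_def)

lemma ent_sum4: fixes n :: nat and e1 e2 :: "nat \<Rightarrow> real" and p1 p2 :: real shows "(\<Sum>k<n*4. gl (p1 * e1 (k div 4) * (if k mod 4 = 1 then 1 else 0) + p2 * e2 (k div 4) * (if k mod 4 = 2 then 1 else 0)))
   = (\<Sum>i<n. gl (p1 * e1 i) + gl (p2 * e2 i))"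
  unfolding sum_split_mult by (intro sum.cong refl) (simp add: sum4 divmod_aux)

lemma ent_sum2: fixes n :: nat and s :: "nat \<Rightarrow> real" shows "(\<Sum>k<n*2. gl (s (k div 2) * (1/2))) = (\<Sum>i<n. 2 * gl (s i * (1/2)))"
  unfolding sum_split_mult by (intro sum.cong refl) (simp add: sum2 divmod_aux)

lemma gl_half: "0 \<le> x \<Longrightarrow> 2 * gl (x * (1/2)) = gl x - x"
proof -
  assume x: "0 \<le> x"
  have g: "gl (1/2) = - 1/2" unfolding gl_def by (simp add: log_divide)
  have "gl ((1/2) * x) = (1/2) * gl x + x * gl (1/2)" by (rule gl_mult) (use x in auto)
  then show ?thesis using g by (simp add: mult.commute)
qed

lemma ptrace_rho:
  assumes r1: "\<rho>1 \<in> carrier_mat n n" and r2: "\<rho>2 \<in> carrier_mat n n"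
  shows "ptrace_last 2 (c1 \<cdot>\<^sub>m kron \<rho>1 (proj psi_plus) + c2 \<cdot>\<^sub>m kron \<rho>2 (proj psi_minus))
     = kron (c1 \<cdot>\<^sub>m \<rho>1 + c2 \<cdot>\<^sub>m \<rho>2) (dm 2 (\<lambda>_. 1/2))"
    (is "ptrace_last 2 ?R = ?K")
proof (rule eq_matI)
  have dR: "dim_row ?R = n*4" "dim_col ?R = n*4" using r1 r2 by auto
  show "dim_row (ptrace_last 2 ?R) = dim_row ?K" "dim_col (ptrace_last 2 ?R) = dim_col ?K"
    using r1 r2 dR by (auto simp: ptrace_last_def)
  fix i j assume i: "i < dim_row ?K" and j: "j < dim_col ?K"
  hence i: "i < n * 2" and j: "j < n * 2" using r1 r2 by auto
  define q where "q = i div 2" define b where "b = i mod 2"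
  define q' where "q' = j div 2" define b' where "b' = j mod 2"
  have iq: "i = q * 2 + b" and b: "b < 2" and q: "q < n" unfolding q_def b_def using i by auto
  have jq: "j = q' * 2 + b'" and b': "b' < 2" and q': "q' < n" unfolding q'_def b'_def using j by auto
  have Rent: "?R $$ (x * 4 + t, y * 4 + u) = c1 * \<rho>1 $$ (x, y) * proj psi_plus $$ (t, u) + c2 * \<rho>2 $$ (x, y) * proj psi_minus $$ (t, u)"
    if "x < n" "y < n" "t < 4" "u < 4" for x y t u
  proof -
    have "x * 4 + t < n * 4" "y * 4 + u < n * 4" using that idx_lt by auto
    then show ?thesis using that r1 r2 by (simp add: kron_index divmod_aux)
  qed
  have ix: "(q * 2 + b) * 2 + c = q * 4 + (b * 2 + c)" for c by simp
  have jx: "(q' * 2 + b') * 2 + c = q' * 4 + (b' * 2 + c)" for c by simp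
  have "ptrace_last 2 ?R $$ (i,j) = (\<Sum>c<2. ?R $$ (i * 2 + c, j * 2 + c))"
    using i j dR by (simp add: ptrace_last_def)
  also have "\<dots> = (\<Sum>c<2. c1 * \<rho>1 $$ (q, q') * proj psi_plus $$ (b * 2 + c, b' * 2 + c) + c2 * \<rho>2 $$ (q, q') * proj psi_minus $$ (b * 2 + c, b' * 2 + c))"
  proof (intro sum.cong refl)
    fix c assume c: "c \<in> {..<2::nat}"
    have "b * 2 + c < 4" "b' * 2 + c < 4" using b b' c by auto
    then show "?R $$ (i * 2 + c, j * 2 + c) = c1 * \<rho>1 $$ (q, q') * proj psi_plus $$ (b * 2 + c, b' * 2 + c) + c2 * \<rho>2 $$ (q, q') * proj psi_minus $$ (b * 2 + c, b' * 2 + c)"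
      unfolding iq jq ix jx using Rent q q' by blast
  qed
  also have "\<dots> = (c1 * \<rho>1 $$ (q, q') + c2 * \<rho>2 $$ (q, q')) * (if b = b' then 1/2 else 0)"
    using b b' by (auto simp: sum2 pplus_index pminus_index elim!: less2E)
  also have "\<dots> = ?K $$ (i,j)"
    using i j r1 r2 q q' b b' by (simp add: kron_index dm_index q_def b_def q'_def b'_def)
  finally show "ptrace_last 2 ?R $$ (i,j) = ?K $$ (i,j)" .
qed

lemma kron_udu:
  assumes U: "U \<in> carrier_mat a a" and V: "V \<in> carrier_mat b b"
  shows "kron (U * dm a d * mat_adjoint U) (V * dm b e * mat_adjoint V) =
     kron U V * dm (a*b) (\<lambda>k. d (k div b) * e (k mod b)) * mat_adjoint (kron U V)"
proof -
  have "kron (U * dm a d * mat_adjoint U) (V * dm b e * mat_adjoint V) = kron (U * dm a d) (V * dm b e) * kron (mat_adjoint U) (mat_adjoint V)"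
    using U V by (subst kron_mult) auto
  also have "kron (U * dm a d) (V * dm b e) = kron U V * kron (dm a d) (dm b e)"
    using U V by (subst kron_mult) auto
  finally show ?thesis unfolding adj_kron kron_dm .
qed

lemma density_udu: assumes "unitary n U" "\<And>k. k < n \<Longrightarrow> 0 \<le> d k" "(\<Sum>k<n. d k) = 1"
  shows "density n (U * dm n d * mat_adjoint U)"
proof -
  have t: "mtrace (U * dm n d * mat_adjoint U) = complex_of_real (\<Sum>k<n. d k)" by (rule trace_udu[OF assms(1)])
  show ?thesis unfolding density_def t assms(3) using psd_udu[OF assms(1,2)] by simp
qed

lemma qf_entry: assumes C: "C \<in> carrier_mat n n" and v: "v \<in> carrier_vec n"
  shows "(C *\<^sub>v v) \<bullet>c v = (\<Sum>i<n. \<Sum>l<n. C $$ (i,l) * v $ l * cnj (v $ i))"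
proof -
  have Cv: "(C *\<^sub>v v) $ i = (\<Sum>l<n. C $$ (i,l) * v $ l)" if i: "i < n" for i
  proof -
    have dA: "dim_row C = n" "dim_col C = n" using C by auto
    have dv: "dim_vec v = n" using v by auto
    have "(C *\<^sub>v v) $ i = row C i \<bullet> v" using i dA by (simp only: index_mult_mat_vec)
    also have "\<dots> = (\<Sum>l<n. row C i $ l * v $ l)" unfolding scalar_prod_def dv atLeast0LessThan ..
    also have "\<dots> = (\<Sum>l<n. C $$ (i,l) * v $ l)"
      using i dA by (intro sum.cong refl) (simp only: index_row(1) lessThan_iff)
    finally show ?thesis .
  qed
  have "(C *\<^sub>v v) \<bullet>c v = (\<Sum>i<n. (C *\<^sub>v v) $ i * cnj (v $ i))"
    using v by (simp add: cscalar_sum)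
  also have "\<dots> = (\<Sum>i<n. (\<Sum>l<n. C $$ (i,l) * v $ l) * cnj (v $ i))"
    by (intro sum.cong refl) (simp only: Cv lessThan_iff)
  also have "\<dots> = (\<Sum>i<n. \<Sum>l<n. C $$ (i,l) * v $ l * cnj (v $ i))"
    by (simp add: sum_distrib_right del: mult_entry)
  finally show ?thesis .
qed

lemma psd_comb: assumes A: "psd_mat n A" and B: "psd_mat n B" and a: "0 \<le> a" and b: "0 \<le> b"
  shows "psd_mat n (complex_of_real a \<cdot>\<^sub>m A + complex_of_real b \<cdot>\<^sub>m B)"
  unfolding psd_mat_def hermitian_mat_def
proof (intro conjI ballI)
  have Ac: "A \<in> carrier_mat n n" and Bc: "B \<in> carrier_mat n n" and HA: "mat_adjoint A = A" and HB: "mat_adjoint B = B"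
    using A B unfolding psd_mat_def hermitian_mat_def by auto
  let ?C = "complex_of_real a \<cdot>\<^sub>m A + complex_of_real b \<cdot>\<^sub>m B"
  show C: "?C \<in> carrier_mat n n" using Ac Bc by simp
  show "mat_adjoint ?C = ?C" using Ac Bc HA HB by (simp add: adj_add[of _ n n] adj_smult)
  fix v :: "complex vec" assume v: "v \<in> carrier_vec n"
  have "(?C *\<^sub>v v) \<bullet>c v = (\<Sum>i<n. \<Sum>l<n. ?C $$ (i,l) * v $ l * cnj (v $ i))" by (rule qf_entry[OF C v])
  also have "\<dots> = complex_of_real a * (\<Sum>i<n. \<Sum>l<n. A $$ (i,l) * v $ l * cnj (v $ i)) +
       complex_of_real b * (\<Sum>i<n. \<Sum>l<n. B $$ (i,l) * v $ l * cnj (v $ i))"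
  proof -
    have "(\<Sum>i<n. \<Sum>l<n. ?C $$ (i,l) * v $ l * cnj (v $ i)) =
      (\<Sum>i<n. \<Sum>l<n. complex_of_real a * (A $$ (i,l) * v $ l * cnj (v $ i)) + complex_of_real b * (B $$ (i,l) * v $ l * cnj (v $ i)))"
    proof (intro sum.cong refl)
      fix i l assume "i \<in> {..<n}" "l \<in> {..<n}"
      then show "?C $$ (i,l) * v $ l * cnj (v $ i) = complex_of_real a * (A $$ (i,l) * v $ l * cnj (v $ i)) + complex_of_real b * (B $$ (i,l) * v $ l * cnj (v $ i))"
        using Ac Bc by (simp add: algebra_simps)
    qed
    also have "\<dots> = complex_of_real a * (\<Sum>i<n. \<Sum>l<n. A $$ (i,l) * v $ l * cnj (v $ i)) +
       complex_of_real b * (\<Sum>i<n. \<Sum>l<n. B $$ (i,l) * v $ l * cnj (v $ i))"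
      by (simp only: sum.distrib sum_distrib_left)
    finally show ?thesis .
  qed
  also have "\<dots> = complex_of_real a * ((A *\<^sub>v v) \<bullet>c v) + complex_of_real b * ((B *\<^sub>v v) \<bullet>c v)"
    using qf_entry[OF Ac v] qf_entry[OF Bc v] by simp
  finally have "Re ((?C *\<^sub>v v) \<bullet>c v) = a * Re ((A *\<^sub>v v) \<bullet>c v) + b * Re ((B *\<^sub>v v) \<bullet>c v)" by simp
  moreover have "0 \<le> Re ((A *\<^sub>v v) \<bullet>c v)" "0 \<le> Re ((B *\<^sub>v v) \<bullet>c v)"
    using A B v unfolding psd_mat_def by auto
  ultimately show "0 \<le> Re ((?C *\<^sub>v v) \<bullet>c v)" using a b by simp
qed

lemma kidx: assumes c: "0 < (c::nat)"
  shows "(i::nat) div (b*c) = i div c div b" "i mod (b*c) div c = i div c mod b" "i mod (b*c) mod c = i mod c"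
proof -
  have bc: "b * c = c * b" by (rule mult.commute)
  show "i div (b*c) = i div c div b" unfolding bc by (rule div_mult2_eq)
  have m: "i mod (b*c) = c * (i div c mod b) + i mod c" unfolding bc by (rule mod_mult2_eq)
  have lt: "i mod c < c" using c by simp
  show "i mod (b*c) div c = i div c mod b" unfolding m using lt c by simp
  show "i mod (b*c) mod c = i mod c" unfolding m using lt c by simp
qed

lemma kron_assoc: "kron (kron A B) C = kron A (kron B C)"
proof (rule eq_matI)
  fix i j assume i: "i < dim_row (kron A (kron B C))" and j: "j < dim_col (kron A (kron B C))"
  let ?b = "dim_row B" and ?c = "dim_row C" and ?b' = "dim_col B" and ?c' = "dim_col C"
  have i1: "i < dim_row A * ?b * ?c" and j1: "j < dim_col A * ?b' * ?c'" using i j by (auto simp: mult.assoc)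
  have i2: "i < dim_row A * (?b * ?c)" and j2: "j < dim_col A * (?b' * ?c')" using i j by auto
  have c: "0 < ?c" "0 < ?c'" using i1 j1 by (auto intro: gr0I)
  have "i div ?c < dim_row A * ?b" "j div ?c' < dim_col A * ?b'" using idx_div i1 j1 by auto
  moreover have "i mod (?b * ?c) < ?b * ?c" "j mod (?b' * ?c') < ?b' * ?c'" using idx_mod i2 j2 by auto
  ultimately show "kron (kron A B) C $$ (i,j) = kron A (kron B C) $$ (i,j)"
    using i1 j1 i2 j2 idx_bounds[OF i1] idx_bounds[OF j1]
    by (simp add: kron_index kidx[OF c(1)] kidx[OF c(2)])
qed (auto simp: mult.assoc)

lemma F_sum: "kron F0 F1 + kron F1 F0 = proj psi_plus + proj psi_minus"
proof (rule eq_matI)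
  fix i j assume "i < dim_row (proj psi_plus + proj psi_minus)" "j < dim_col (proj psi_plus + proj psi_minus)"
  hence i: "i < 4" and j: "j < 4" by auto
  have d: "dim_row F0 = 2" "dim_col F0 = 2" "dim_row F1 = 2" "dim_col F1 = 2" by (auto simp: F0_def F1_def)
  have e: "(kron F0 F1 + kron F1 F0) $$ (i,j) = kron F0 F1 $$ (i,j) + kron F1 F0 $$ (i,j)"
    using i j d by simp
  have e2: "(proj psi_plus + proj psi_minus) $$ (i,j) = proj psi_plus $$ (i,j) + proj psi_minus $$ (i,j)"
    using i j by simp
  have k: "kron F0 F1 $$ (i,j) = F0 $$ (i div 2, j div 2) * F1 $$ (i mod 2, j mod 2)"
    "kron F1 F0 $$ (i,j) = F1 $$ (i div 2, j div 2) * F0 $$ (i mod 2, j mod 2)"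
    using i j d by (simp_all add: kron_index)
  show "(kron F0 F1 + kron F1 F0) $$ (i,j) = (proj psi_plus + proj psi_minus) $$ (i,j)"
    unfolding e e2 k pplus_index[OF i j] pminus_index[OF i j] using i j
    by (elim less4E; elim less4E; simp add: F0_def F1_def dm_index)
qed (auto simp: F0_def F1_def)

lemma F_density: "density 2 F0" "density 2 F1"
proof -
  have u: "unitary 2 (1\<^sub>m 2)" by (rule unitary_one)
  have "F0 = 1\<^sub>m 2 * dm 2 (\<lambda>k. if k = 0 then 1 else 0) * mat_adjoint (1\<^sub>m 2)" unfolding F0_def by simp
  moreover have "density 2 (1\<^sub>m 2 * dm 2 (\<lambda>k. if k = 0 then 1 else 0) * mat_adjoint (1\<^sub>m 2))"
    by (rule density_udu[OF u]) (auto simp: sum2)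
  ultimately show "density 2 F0" by metis
  have "F1 = 1\<^sub>m 2 * dm 2 (\<lambda>k. if k = 1 then 1 else 0) * mat_adjoint (1\<^sub>m 2)" unfolding F1_def by simp
  moreover have "density 2 (1\<^sub>m 2 * dm 2 (\<lambda>k. if k = 1 then 1 else 0) * mat_adjoint (1\<^sub>m 2))"
    by (rule density_udu[OF u]) (auto simp: sum2)
  ultimately show "density 2 F1" by metis
qed

lemma mtrace_comb: assumes "A \<in> carrier_mat n n" "B \<in> carrier_mat n n"
  shows "mtrace (a \<cdot>\<^sub>m A + b \<cdot>\<^sub>m B) = a * mtrace A + b * mtrace B"
proof -
  have "mtrace (a \<cdot>\<^sub>m A + b \<cdot>\<^sub>m B) = (\<Sum>i<n. a * A $$ (i,i) + b * B $$ (i,i))"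
    unfolding mtrace_def using assms by (intro sum.cong) auto
  also have "\<dots> = a * mtrace A + b * mtrace B"
    unfolding mtrace_def using assms by (simp add: sum.distrib sum_distrib_left)
  finally show ?thesis .
qed

lemma dens_kron:
  assumes uU: "unitary a U" and d0: "\<And>k. k < a \<Longrightarrow> 0 \<le> d k" and sd: "(\<Sum>k<a. d k) = 1"
    and uV: "unitary b V" and e0: "\<And>k. k < b \<Longrightarrow> 0 \<le> e k" and se: "(\<Sum>k<b. e k) = 1"
  shows "density (a*b) (kron (U * dm a d * mat_adjoint U) (V * dm b e * mat_adjoint V))"
proof -
  have U: "U \<in> carrier_mat a a" and V: "V \<in> carrier_mat b b" using uU uV unitary_carrier by auto
  have "density (a*b) (kron U V * dm (a*b) (\<lambda>k. d (k div b) * e (k mod b)) * mat_adjoint (kron U V))"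
  proof (rule density_udu[OF unitary_kron[OF uU uV]])
    fix k assume k: "k < a * b"
    show "0 \<le> d (k div b) * e (k mod b)" using d0[OF idx_div[OF k]] e0[OF idx_mod[OF k]] by simp
  next
    have "(\<Sum>k<a*b. d (k div b) * e (k mod b)) = (\<Sum>i<a. \<Sum>j<b. d i * e j)"
      unfolding sum_split_mult by (intro sum.cong refl) (simp add: divmod_aux)
    also have "\<dots> = 1" using sd se by (simp add: sum_product[symmetric])
    finally show "(\<Sum>k<a*b. d (k div b) * e (k mod b)) = 1" .
  qed
  then show ?thesis unfolding kron_udu[OF U V] .
qed

lemma F_udu: "F0 = 1\<^sub>m 2 * dm 2 (\<lambda>k. if k = 0 then 1 else 0) * mat_adjoint (1\<^sub>m 2)"
  "F1 = 1\<^sub>m 2 * dm 2 (\<lambda>k. if k = 1 then 1 else 0) * mat_adjoint (1\<^sub>m 2)"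
  unfolding F0_def F1_def by simp_all

lemma herm_udu_decomp:
  assumes "density n A"
  shows "\<exists>U e. unitary n U \<and> A = U * dm n e * mat_adjoint U \<and> (\<forall>k<n. 0 \<le> e k) \<and> (\<Sum>k<n. e k) = 1"
proof -
  have h: "hermitian_mat n A" and psd: "psd_mat n A" and tr: "mtrace A = 1"
    using assms unfolding density_def psd_mat_def by auto
  obtain U e where uU: "unitary n U" and A: "A = U * dm n e * mat_adjoint U" using spectral[OF h] by blast
  have e0: "\<forall>k<n. 0 \<le> e k" using eig_nonneg[OF uU] psd unfolding A by blast
  have "complex_of_real (\<Sum>k<n. e k) = 1" using trace_udu[OF uU, of e] tr unfolding A by simp
  hence "(\<Sum>k<n. e k) = 1" by (simp only: of_real_eq_1_iff)
  then show ?thesis using uU A e0 by blast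
qed

theorem mainTheorem5:
  fixes d m :: nat and p1 p2 :: real and \<rho>1 \<rho>2 \<rho> :: "complex mat"
  assumes "density (d * m) \<rho>1" and "density (d * m) \<rho>2"
    and "0 \<le> p1" and "0 \<le> p2" and "p1 + p2 = 1"
    and "\<rho> = complex_of_real p1 \<cdot>\<^sub>m kron \<rho>1 (proj psi_plus)
           + complex_of_real p2 \<cdot>\<^sub>m kron \<rho>2 (proj psi_minus)"
  shows "vn_entropy (ptrace_last 2 \<rho>) \<ge> vn_entropy \<rho>
    \<and> (vn_entropy (ptrace_last 2 \<rho>) = vn_entropy \<rho> \<longrightarrow>
         \<rho>1 = \<rho>2 \<and> p1 = 1/2 \<and> p2 = 1/2 \<and> separable (d * m * 2) 2 \<rho>)
    \<and> (\<forall>distillable :: complex mat \<Rightarrow> bool.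
         (\<forall>\<sigma>. density (d * m * 2 * 2) \<sigma> \<longrightarrow>
              vn_entropy (ptrace_last 2 \<sigma>) > vn_entropy \<sigma> \<longrightarrow> distillable \<sigma>)
         \<longrightarrow> \<not> bound_entangled distillable (d * m * 2) 2 \<rho>)"
proof -
  define n where "n = d * m"
  have D1: "density n \<rho>1" and D2: "density n \<rho>2" using assms(1,2) unfolding n_def .
  have p: "0 \<le> p1" "0 \<le> p2" "p1 + p2 = 1" using assms(3,4,5) .
  have rho_def: "\<rho> = complex_of_real p1 \<cdot>\<^sub>m kron \<rho>1 (proj psi_plus) + complex_of_real p2 \<cdot>\<^sub>m kron \<rho>2 (proj psi_minus)"
    using assms(6) .
  obtain Q1 e1 where uQ1: "unitary n Q1" and r1: "\<rho>1 = Q1 * dm n e1 * mat_adjoint Q1"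
    and e1p: "\<forall>k<n. 0 \<le> e1 k" and se1: "(\<Sum>k<n. e1 k) = 1" using herm_udu_decomp[OF D1] by blast
  obtain Q2 e2 where uQ2: "unitary n Q2" and r2: "\<rho>2 = Q2 * dm n e2 * mat_adjoint Q2"
    and e2p: "\<forall>k<n. 0 \<le> e2 k" and se2: "(\<Sum>k<n. e2 k) = 1" using herm_udu_decomp[OF D2] by blast
  have e1p': "\<And>k. k < n \<Longrightarrow> 0 \<le> e1 k" and e2p': "\<And>k. k < n \<Longrightarrow> 0 \<le> e2 k" using e1p e2p by auto
  have C1: "\<rho>1 \<in> carrier_mat n n" and C2: "\<rho>2 \<in> carrier_mat n n"
    using D1 D2 unfolding density_def psd_mat_def hermitian_mat_def by auto
  define \<sigma> where "\<sigma> = complex_of_real p1 \<cdot>\<^sub>m \<rho>1 + complex_of_real p2 \<cdot>\<^sub>m \<rho>2"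
  have psd1: "psd_mat n \<rho>1" and psd2: "psd_mat n \<rho>2" using D1 D2 unfolding density_def by auto
  have tr1: "mtrace \<rho>1 = 1" and tr2: "mtrace \<rho>2 = 1" using D1 D2 unfolding density_def by auto
  have "mtrace \<sigma> = complex_of_real p1 * mtrace \<rho>1 + complex_of_real p2 * mtrace \<rho>2"
    unfolding \<sigma>_def by (rule mtrace_comb[OF C1 C2])
  also have "\<dots> = complex_of_real (p1 + p2)" unfolding tr1 tr2 by simp
  finally have trs: "mtrace \<sigma> = 1" using p(3) by simp
  have Ds: "density n \<sigma>" unfolding density_def using psd_comb[OF psd1 psd2 p(1) p(2)] trs unfolding \<sigma>_def by simp
  obtain Q s where uQ: "unitary n Q" and rs: "\<sigma> = Q * dm n s * mat_adjoint Q"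
    and sp: "\<forall>k<n. 0 \<le> s k" and ss: "(\<Sum>k<n. s k) = 1" using herm_udu_decomp[OF Ds] by blast
  have Q: "Q \<in> carrier_mat n n" using uQ unitary_carrier by auto
  define g where "g k = p1 * e1 (k div 4) * (if k mod 4 = 1 then 1 else 0) + p2 * e2 (k div 4) * (if k mod 4 = 2 then 1 else 0)" for k
  define W where "W = WW Q1 Q2"
  have uW: "unitary (n*4) W" unfolding W_def by (rule unitary_WW[OF uQ1 uQ2])
  have rho: "\<rho> = W * dm (n*4) g * mat_adjoint W"
  proof -
    have "\<rho> = complex_of_real p1 \<cdot>\<^sub>m kron (Q1 * dm n e1 * mat_adjoint Q1) (proj psi_plus)
        + complex_of_real p2 \<cdot>\<^sub>m kron (Q2 * dm n e2 * mat_adjoint Q2) (proj psi_minus)"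
      unfolding rho_def r1 r2 ..
    also have "\<dots> = W * (kron (dm n (\<lambda>i. p1 * e1 i)) E1 + kron (dm n (\<lambda>i. p2 * e2 i)) E2) * mat_adjoint W"
      unfolding W_def by (rule WW_rho[OF uQ1 uQ2, symmetric])
    also have "\<dots> = W * dm (n*4) g * mat_adjoint W" unfolding Dg_dm g_def ..
    finally show ?thesis .
  qed
  have SABC: "vn_entropy \<rho> = - (\<Sum>i<n. gl (p1 * e1 i) + gl (p2 * e2 i))"
    unfolding rho vn_entropy_diag[OF uW] g_def ent_sum4 ..
  have glsum: "(\<Sum>i<n. gl (p1 * e1 i) + gl (p2 * e2 i)) =
      p1 * (\<Sum>i<n. gl (e1 i)) + p2 * (\<Sum>i<n. gl (e2 i)) + gl p1 + gl p2"
  proof -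
    have "(\<Sum>i<n. gl (p1 * e1 i) + gl (p2 * e2 i)) =
        (\<Sum>i<n. p1 * gl (e1 i) + gl p1 * e1 i + (p2 * gl (e2 i) + gl p2 * e2 i))"
    proof (intro sum.cong refl)
      fix i assume "i \<in> {..<n}"
      hence i: "i < n" by simp
      show "gl (p1 * e1 i) + gl (p2 * e2 i) = p1 * gl (e1 i) + gl p1 * e1 i + (p2 * gl (e2 i) + gl p2 * e2 i)"
        using gl_mult[OF p(1) e1p'[OF i]] gl_mult[OF p(2) e2p'[OF i]] by (simp add: mult.commute)
    qed
    also have "\<dots> = p1 * (\<Sum>i<n. gl (e1 i)) + gl p1 * (\<Sum>i<n. e1 i) + (p2 * (\<Sum>i<n. gl (e2 i)) + gl p2 * (\<Sum>i<n. e2 i))"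
      by (simp only: sum.distrib sum_distrib_left)
    also have "\<dots> = p1 * (\<Sum>i<n. gl (e1 i)) + p2 * (\<Sum>i<n. gl (e2 i)) + gl p1 + gl p2"
      unfolding se1 se2 by simp
    finally show ?thesis .
  qed
  have pt: "ptrace_last 2 \<rho> = kron \<sigma> (dm 2 (\<lambda>_. 1/2))"
    unfolding rho_def \<sigma>_def by (rule ptrace_rho[OF C1 C2])
  have half: "dm 2 (\<lambda>_. 1/2) = 1\<^sub>m 2 * dm 2 (\<lambda>_. 1/2) * mat_adjoint (1\<^sub>m 2)" by simp
  have pt2: "ptrace_last 2 \<rho> = kron Q (1\<^sub>m 2) * dm (n*2) (\<lambda>k. s (k div 2) * (1/2)) * mat_adjoint (kron Q (1\<^sub>m 2))"
    unfolding pt rs by (subst half) (rule kron_udu[OF Q one_carrier_mat])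
  have SAB: "vn_entropy (ptrace_last 2 \<rho>) = - (\<Sum>i<n. gl (s i)) + 1"
  proof -
    have "vn_entropy (ptrace_last 2 \<rho>) = - (\<Sum>k<n*2. gl (s (k div 2) * (1/2)))"
      unfolding pt2 by (rule vn_entropy_diag[OF unitary_kron[OF uQ unitary_one]])
    also have "(\<Sum>k<n*2. gl (s (k div 2) * (1/2))) = (\<Sum>i<n. 2 * gl (s i * (1/2)))" by (rule ent_sum2)
    also have "\<dots> = (\<Sum>i<n. gl (s i) - s i)"
    proof (intro sum.cong refl)
      fix i assume "i \<in> {..<n}"
      then show "2 * gl (s i * (1/2)) = gl (s i) - s i" using sp by (intro gl_half) simp
    qed
    also have "\<dots> = (\<Sum>i<n. gl (s i)) - 1" unfolding sum_subtractf ss ..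
    finally show ?thesis by simp
  qed
  have sig: "Q * dm n s * mat_adjoint Q = complex_of_real p1 \<cdot>\<^sub>m (Q1 * dm n e1 * mat_adjoint Q1)
      + complex_of_real p2 \<cdot>\<^sub>m (Q2 * dm n e2 * mat_adjoint Q2)"
    using rs unfolding \<sigma>_def r1 r2 by simp
  have CC1: "(\<Sum>i<n. gl (s i)) \<le> p1 * (\<Sum>j<n. gl (e1 j)) + p2 * (\<Sum>j<n. gl (e2 j))"
    by (rule concavity(1)[of n Q Q1 Q2 e1 e2 p1 p2 s, OF uQ uQ1 uQ2 _ _ p sig]) (use e1p e2p in auto)
  have CC2: "Q1 * dm n e1 * mat_adjoint Q1 = Q2 * dm n e2 * mat_adjoint Q2"
    if "p1 = 1/2" "p2 = 1/2" "(\<Sum>i<n. gl (s i)) = p1 * (\<Sum>j<n. gl (e1 j)) + p2 * (\<Sum>j<n. gl (e2 j))"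
    by (rule concavity(2)[of n Q Q1 Q2 e1 e2 p1 p2 s, OF uQ uQ1 uQ2 _ _ p sig that]) (use e1p e2p in auto)
  note BE = binary_entropy[OF p]
  have ineq: "vn_entropy (ptrace_last 2 \<rho>) \<ge> vn_entropy \<rho>"
    unfolding SAB SABC glsum using CC1 BE(1) by linarith
  have eqcase: "\<rho>1 = \<rho>2 \<and> p1 = 1/2 \<and> p2 = 1/2 \<and> separable (d * m * 2) 2 \<rho>"
    if eq: "vn_entropy (ptrace_last 2 \<rho>) = vn_entropy \<rho>"
  proof -
    have e: "(\<Sum>i<n. gl (s i)) = p1 * (\<Sum>j<n. gl (e1 j)) + p2 * (\<Sum>j<n. gl (e2 j))"
      and e': "- gl p1 - gl p2 = 1"
      using eq unfolding SAB SABC glsum using CC1 BE(1) by linarith+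
    have hp1: "p1 = 1/2" using BE(2)[OF e'] .
    have hp2: "p2 = 1/2" using hp1 p(3) by simp
    have req: "\<rho>1 = \<rho>2" unfolding r1 r2 using CC2[OF hp1 hp2 e] .
    have sep: "separable (n * 2) 2 \<rho>"
    proof -
      define c :: complex where "c = complex_of_real (1/2)"
      have rF: "\<rho> = c \<cdot>\<^sub>m (kron (kron \<rho>1 F0) F1 + kron (kron \<rho>1 F1) F0)"
      proof -
        have "\<rho> = c \<cdot>\<^sub>m kron \<rho>1 (proj psi_plus) + c \<cdot>\<^sub>m kron \<rho>1 (proj psi_minus)"
          unfolding rho_def hp1 hp2 req c_def ..
        also have "\<dots> = c \<cdot>\<^sub>m (kron \<rho>1 (proj psi_plus) + kron \<rho>1 (proj psi_minus))"
          by (rule add_smult_distrib_left_mat[symmetric, of _ "n*4" "n*4"]) (use kron_carrier[OF C1 pp_carrier(1)] kron_carrier[OF C1 pp_carrier(2)] in auto)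
        also have "kron \<rho>1 (proj psi_plus) + kron \<rho>1 (proj psi_minus) = kron \<rho>1 (proj psi_plus + proj psi_minus)"
          by (rule kron_add2[symmetric, of _ 4 4]) auto
        also have "\<dots> = kron \<rho>1 (kron F0 F1 + kron F1 F0)" unfolding F_sum ..
        also have "\<dots> = kron \<rho>1 (kron F0 F1) + kron \<rho>1 (kron F1 F0)"
          by (rule kron_add2[of _ 4 4]) (auto simp: F0_def F1_def)
        also have "\<dots> = kron (kron \<rho>1 F0) F1 + kron (kron \<rho>1 F1) F0" unfolding kron_assoc ..
        finally show ?thesis .
      qed
      have f0p: "\<And>k::nat. k < 2 \<Longrightarrow> 0 \<le> (if k = 0 then 1 else (0::real))" by simp
      have f1p: "\<And>k::nat. k < 2 \<Longrightarrow> 0 \<le> (if k = 1 then 1 else (0::real))" by simp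
      have sf0: "(\<Sum>k<(2::nat). if k = 0 then 1 else (0::real)) = 1" by (simp add: sum2)
      have sf1: "(\<Sum>k<(2::nat). if k = 1 then 1 else (0::real)) = 1" by (simp add: sum2)
      have dA: "density (n*2) (kron \<rho>1 F0)"
        unfolding r1 F_udu(1) by (rule dens_kron[of n Q1 e1 2 "1\<^sub>m 2" "\<lambda>k. if k = 0 then 1 else 0", OF uQ1 _ se1 unitary_one f0p sf0]) (use e1p in auto)
      have dB: "density (n*2) (kron \<rho>1 F1)"
        unfolding r1 F_udu(2) by (rule dens_kron[of n Q1 e1 2 "1\<^sub>m 2" "\<lambda>k. if k = 1 then 1 else 0", OF uQ1 _ se1 unitary_one f1p sf1]) (use e1p in auto)
      have dF: "density 2 F0" "density 2 F1" by (rule F_density(1), rule F_density(2))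
      have dims: "dim_row (kron (kron \<rho>1 F0) F1) = n*2*2" "dim_col (kron (kron \<rho>1 F0) F1) = n*2*2"
        "dim_row (kron (kron \<rho>1 F1) F0) = n*2*2" "dim_col (kron (kron \<rho>1 F1) F0) = n*2*2"
        using C1 by (auto simp: F0_def F1_def)
      have carr: "\<rho> \<in> carrier_mat (n*2*2) (n*2*2)" unfolding rF using dims by auto
      define sf where "sf = (\<lambda>k::nat. kron \<rho>1 (if k = 0 then F0 else F1))"
      define tf where "tf = (\<lambda>k::nat. if k = 0 then F1 else F0)"
      have comp: "\<forall>k<2. 0 \<le> (1/2::real) \<and> density (n*2) (sf k) \<and> density 2 (tf k)"
      proof (intro allI impI)
        fix k :: nat assume "k < 2"
        then show "0 \<le> (1/2::real) \<and> density (n*2) (sf k) \<and> density 2 (tf k)"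
          unfolding sf_def tf_def using dA dB dF by (elim less2E) simp_all
      qed
      have sump: "(\<Sum>k<(2::nat). (1/2::real)) = 1" by (simp add: sum2)
      have ent: "\<forall>i<n*2*2. \<forall>j<n*2*2. \<rho> $$ (i,j) = (\<Sum>k<2. complex_of_real (1/2) * kron (sf k) (tf k) $$ (i,j))"
      proof (intro allI impI)
        fix i j assume i: "i < n*2*2" and j: "j < n*2*2"
        have "\<rho> $$ (i,j) = c * kron (kron \<rho>1 F0) F1 $$ (i,j) + c * kron (kron \<rho>1 F1) F0 $$ (i,j)"
          unfolding rF using i j dims by (simp add: distrib_left)
        then show "\<rho> $$ (i,j) = (\<Sum>k<2. complex_of_real (1/2) * kron (sf k) (tf k) $$ (i,j))"
          unfolding c_def sf_def tf_def by (simp add: sum2)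
      qed
      show ?thesis unfolding separable_def
        apply (rule conjI[OF carr])
        apply (rule exI[of _ "2::nat"], rule exI[of _ "\<lambda>_. 1/2 :: real"], rule exI[of _ sf], rule exI[of _ tf])
        using comp sump ent by blast
    qed
    show ?thesis using req hp1 hp2 sep unfolding n_def by simp
  qed
  have dens: "density (d * m * 2 * 2) \<rho>"
  proof -
    have "density (n*4) (W * dm (n*4) g * mat_adjoint W)"
    proof (rule density_udu[OF uW])
      fix k assume k: "k < n*4"
      have "k div 4 < n" using idx_div[OF k] .
      then show "0 \<le> g k" unfolding g_def using e1p' e2p' p by simp
    next
      have "(\<Sum>k<n*4. g k) = (\<Sum>i<n. p1 * e1 i + p2 * e2 i)"
        unfolding sum_split_mult g_def by (intro sum.cong refl) (simp add: sum4 divmod_aux)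
      also have "\<dots> = p1 + p2" using se1 se2 by (simp add: sum.distrib sum_distrib_left[symmetric])
      finally show "(\<Sum>k<n*4. g k) = 1" using p(3) by simp
    qed
    moreover have e: "d * m * 2 * 2 = n * 4" unfolding n_def by simp
    ultimately show ?thesis unfolding rho e by blast
  qed
  have third: "\<forall>distillable :: complex mat \<Rightarrow> bool.
         (\<forall>\<sigma>. density (d * m * 2 * 2) \<sigma> \<longrightarrow>
              vn_entropy (ptrace_last 2 \<sigma>) > vn_entropy \<sigma> \<longrightarrow> distillable \<sigma>)
         \<longrightarrow> \<not> bound_entangled distillable (d * m * 2) 2 \<rho>"
  proof (intro allI impI)
    fix distillable :: "complex mat \<Rightarrow> bool"
    assume H: "\<forall>\<sigma>. density (d * m * 2 * 2) \<sigma> \<longrightarrow> vn_entropy (ptrace_last 2 \<sigma>) > vn_entropy \<sigma> \<longrightarrow> distillable \<sigma>"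
    show "\<not> bound_entangled distillable (d * m * 2) 2 \<rho>"
    proof (cases "vn_entropy (ptrace_last 2 \<rho>) > vn_entropy \<rho>")
      case True
      then have "distillable \<rho>" using H dens by blast
      then show ?thesis unfolding bound_entangled_def by blast
    next
      case False
      then have "vn_entropy (ptrace_last 2 \<rho>) = vn_entropy \<rho>" using ineq by linarith
      then have "separable (d * m * 2) 2 \<rho>" using eqcase by blast
      then show ?thesis unfolding bound_entangled_def entangled_def by blast
    qed
  qed
  show ?thesis using ineq eqcase third by blast
qed

end
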